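(* Let $\Omega\subset\mathbb R^n$ be open and $t_1<t_2$. For each $(x,t)\in\Omega\times(t_1,t_2)$ let $\mathbb A_{x,t}$ be a nonempty collection of nonempty subsets of $\mathbb S^n_+(\mathbb R)\times(0,\infty)$ such that $\bigcup\mathbb A_{x,t}=\{(A,b):(A,b)\in\mathcal A\text{ for some }\mathcal A\in\mathbb A_{x,t}\}$ is bounded, and define $$F(x,t,z,M)=\sup_{\mathcal A\in\mathbb A_{x,t}}\inf_{(A,b)\in\mathcal A}\big\{\operatorname{trace}(A^tMA)-b\,z\big\},\qquad z\in\mathbb R,\ M\in\mathbb S^n(\mathbb R).$$ A function $u\in C(\Omega\times(t_1,t_2))$ is a viscosity solution of $F(x,t,\partial_tu,D^2u)=0$ in $\Omega\times(t_1,t_2)$ if and only if $$u(x,t)=\sup_{\mathcal A\in\mathbb A_{x,t}}\inf_{(A,b)\in\mathcal A}\frac{1}{\frac{b}{n+2}\varepsilon^2}\int_{t-\frac{b}{n+2}\varepsilon^2}^{t}\frac{1}{|B_\varepsilon(0)|}\int_{B_\varepsilon(0)}u(x+Ay,s)\,dy\,ds+o(\varepsilon^2)\quad\text{as }\varepsilon\to0$$ in the viscosity sense.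
   Context: $\mathbb S^n(\mathbb R)$ is the set of symmetric $n\times n$ real matrices and $\mathbb S^n_+(\mathbb R)$ the positive semidefinite ones. $C^{2,1}$ denotes functions twice continuously differentiable in $x$ and continuously differentiable in $t$. For a constant $c$ and function $g$, "$c\le g(\varepsilon)+o(\varepsilon^2)$" means $\lim_{\varepsilon\to0}[c-g(\varepsilon)]^+/\varepsilon^2=0$ and "$c\ge g(\varepsilon)+o(\varepsilon^2)$" means $\lim_{\varepsilon\to0}[c-g(\varepsilon)]^-/\varepsilon^2=0$. Viscosity solution: $u$ continuous is a viscosity solution of $F(x,t,\partial_tu,D^2u)=0$ if for every $(x,t)\in\Omega\times(t_1,t_2)$ and every $\phi\in C^{2,1}$: (i) if $u-\phi$ has a strict local maximum at $(x,t)$ with $u(x,t)=\phi(x,t)$, then $F(x,t,\partial_t\phi(x,t),D^2\phi(x,t))\ge0$; (ii) if $u-\phi$ has a strict local minimum at $(x,t)$ with $u(x,t)=\phi(x,t)$, then $F(x,t,\partial_t\phi(x,t),D^2\phi(x,t))\le0$. Asymptotic formula in the viscosity sense: writing it as $u(x,t)=M_\varepsilon[u](x,t)+o(\varepsilon^2)$ with $M_\varepsilon[v](x,t)$ the right-hand side sup-inf of averages, it holds in the viscosity sense if for every $(x,t)$ and every $\phi\in C^{2,1}$: (i) if $u-\phi$ has a strict local minimum at $(x,t)$ with $u(x,t)=\phi(x,t)$, then $0\ge-\phi(x,t)+M_\varepsilon[\phi](x,t)+o(\varepsilon^2)$; (ii) if $u-\phi$ has a strict local maximum at $(x,t)$ with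 $u(x,t)=\phi(x,t)$, then $0\le-\phi(x,t)+M_\varepsilon[\phi](x,t)+o(\varepsilon^2)$. *)

theory Defs
  imports "HOL-Analysis.Analysis"
begin

definition psd_matrix :: "real^'n^'n \<Rightarrow> bool" where
  "psd_matrix A \<longleftrightarrow> transpose A = A \<and> (\<forall>v. 0 \<le> v \<bullet> (A *v v))"

definition F_op ::
  "(real^'a::finite \<Rightarrow> real \<Rightarrow> ((real^'a^'a) \<times> real) set set)
    \<Rightarrow> real^'a \<Rightarrow> real \<Rightarrow> real \<Rightarrow> real^'a^'a \<Rightarrow> real" where
  "F_op AA x t z M =
     (SUP \<A>\<in>AA x t. INF p\<in>\<A>. trace (transpose (fst p) ** M ** fst p) - snd p * z)"

definition C21_on ::
  "((real^'n) \<times> real) set \<Rightarrow> (real^'n \<Rightarrow> real \<Rightarrow> real) \<Rightarrow> (real^'n \<Rightarrow> real \<Rightarrow> real)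
    \<Rightarrow> (real^'n \<Rightarrow> real \<Rightarrow> real^'n) \<Rightarrow> (real^'n \<Rightarrow> real \<Rightarrow> real^'n^'n) \<Rightarrow> bool" where
  "C21_on S phi phit Dphi D2phi \<longleftrightarrow>
     (\<forall>(x,t)\<in>S.
        ((\<lambda>s. phi x s) has_real_derivative phit x t) (at t) \<and>
        ((\<lambda>y. phi y t) has_derivative (\<lambda>h. Dphi x t \<bullet> h)) (at x) \<and>
        ((\<lambda>y. Dphi y t) has_derivative (\<lambda>h. D2phi x t *v h)) (at x)) \<and>
     continuous_on S (\<lambda>(x,t). phi x t) \<and>
     continuous_on S (\<lambda>(x,t). phit x t) \<and>
     continuous_on S (\<lambda>(x,t). Dphi x t) \<and>
     continuous_on S (\<lambda>(x,t). D2phi x t)"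

definition strict_loc_max ::
  "((real^'n) \<times> real) set \<Rightarrow> (real^'n \<Rightarrow> real \<Rightarrow> real) \<Rightarrow> real^'n \<Rightarrow> real \<Rightarrow> bool" where
  "strict_loc_max S w x t \<longleftrightarrow>
     (\<exists>r>0. \<forall>y s. (y,s) \<in> S \<and> dist y x < r \<and> \<bar>s - t\<bar> < r \<and> (y,s) \<noteq> (x,t)
                 \<longrightarrow> w y s < w x t)"

definition strict_loc_min ::
  "((real^'n) \<times> real) set \<Rightarrow> (real^'n \<Rightarrow> real \<Rightarrow> real) \<Rightarrow> real^'n \<Rightarrow> real \<Rightarrow> bool" where
  "strict_loc_min S w x t \<longleftrightarrow>
     (\<exists>r>0. \<forall>y s. (y,s) \<in> S \<and> dist y x < r \<and> \<bar>s - t\<bar> < r \<and> (y,s) \<noteq> (x,t)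
                 \<longrightarrow> w y s > w x t)"

definition viscosity_solution ::
  "(real^'n) set \<Rightarrow> real \<Rightarrow> real \<Rightarrow> (real^'n \<Rightarrow> real \<Rightarrow> real \<Rightarrow> real^'n^'n \<Rightarrow> real)
    \<Rightarrow> (real^'n \<Rightarrow> real \<Rightarrow> real) \<Rightarrow> bool" where
  "viscosity_solution \<Omega> t1 t2 F u \<longleftrightarrow>
     continuous_on (\<Omega> \<times> {t1<..<t2}) (\<lambda>(x,t). u x t) \<and>
     (\<forall>x t phi phit Dphi D2phi. x \<in> \<Omega> \<and> t \<in> {t1<..<t2} \<and>
        C21_on (\<Omega> \<times> {t1<..<t2}) phi phit Dphi D2phi \<longrightarrow>
        ((strict_loc_max (\<Omega> \<times> {t1<..<t2}) (\<lambda>y s. u y s - phi y s) x t \<and> u x t = phi x t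
            \<longrightarrow> F x t (phit x t) (D2phi x t) \<ge> 0) \<and>
         (strict_loc_min (\<Omega> \<times> {t1<..<t2}) (\<lambda>y s. u y s - phi y s) x t \<and> u x t = phi x t
            \<longrightarrow> F x t (phit x t) (D2phi x t) \<le> 0)))"

definition mean_op ::
  "(real^'n::finite \<Rightarrow> real \<Rightarrow> ((real^'n^'n) \<times> real) set set)
    \<Rightarrow> real \<Rightarrow> (real^'n \<Rightarrow> real \<Rightarrow> real) \<Rightarrow> real^'n \<Rightarrow> real \<Rightarrow> real" where
  "mean_op AA \<epsilon> v x t =
     (SUP \<A>\<in>AA x t. INF p\<in>\<A>.
        (let A = fst p; b = snd p; \<tau> = b / (real CARD('n) + 2) * \<epsilon>\<^sup>2 in
          (1 / \<tau>) * integral {t - \<tau>..t}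
             (\<lambda>s. (1 / measure lborel (ball (0::real^'n) \<epsilon>)) *
                   integral (ball 0 \<epsilon>) (\<lambda>y. v (x + A *v y) s))))"

text \<open>For c = 0 and g(eps) = -phi(x,t) + M_eps[phi](x,t):
  "0 >= g + o(eps^2)" means [0 - g]^- / eps^2 -> 0, i.e. max 0 (g) / eps^2 -> 0;
  "0 <= g + o(eps^2)" means [0 - g]^+ / eps^2 -> 0, i.e. max 0 (-g) / eps^2 -> 0.\<close>
definition asymp_viscosity ::
  "(real^'n) set \<Rightarrow> real \<Rightarrow> real \<Rightarrow> (real^'n \<Rightarrow> real \<Rightarrow> ((real^'n^'n) \<times> real) set set)
    \<Rightarrow> (real^'n \<Rightarrow> real \<Rightarrow> real) \<Rightarrow> bool" where
  "asymp_viscosity \<Omega> t1 t2 AA u \<longleftrightarrow>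
     (\<forall>x t phi phit Dphi D2phi. x \<in> \<Omega> \<and> t \<in> {t1<..<t2} \<and>
        C21_on (\<Omega> \<times> {t1<..<t2}) phi phit Dphi D2phi \<longrightarrow>
        ((strict_loc_min (\<Omega> \<times> {t1<..<t2}) (\<lambda>y s. u y s - phi y s) x t \<and> u x t = phi x t
            \<longrightarrow> ((\<lambda>\<epsilon>. max 0 (- phi x t + mean_op AA \<epsilon> phi x t) / \<epsilon>\<^sup>2) \<longlongrightarrow> 0) (at_right 0)) \<and>
         (strict_loc_max (\<Omega> \<times> {t1<..<t2}) (\<lambda>y s. u y s - phi y s) x t \<and> u x t = phi x t
            \<longrightarrow> ((\<lambda>\<epsilon>. max 0 (- (- phi x t + mean_op AA \<epsilon> phi x t)) / \<epsilon>\<^sup>2) \<longlongrightarrow> 0) (at_right 0))))"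

end

theory Submission
  imports Defs
begin

lemma cont_abs_int_cball:
  fixes f :: "real^'n \<Rightarrow> real"
  assumes "continuous_on (cball c e) f"
  shows "f absolutely_integrable_on ball c e"
proof -
  have "integrable lborel (\<lambda>x. indicator (cball c e) x *\<^sub>R f x)"
    by (rule borel_integrable_compact) (use assms in auto)
  hence "set_integrable lborel (cball c e) f" by (simp add: set_integrable_def)
  hence "set_integrable lebesgue (cball c e) f"
    unfolding set_integrable_def
    by (subst integrable_completion) (auto intro: borel_measurable_integrable)
  then show ?thesis
    by (rule set_integrable_subset) auto
qed

lemma cont_int_ball:
  fixes f :: "real^'n \<Rightarrow> real"
  assumes "continuous_on (cball c e) f"
  shows "f integrable_on ball c e"
  using cont_abs_int_cball[OF assms] set_lebesgue_integral_eq_integral(1) by blast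


lemma has_integral_one_ball: "((\<lambda>x::real^'n. 1::real) has_integral measure lborel (ball c e)) (ball c e)"
proof -
  have "(indicat_real (ball c e) has_integral measure lebesgue (ball c e)) UNIV"
    using lmeasurable_iff_has_integral lmeasurable_ball by blast
  moreover have "indicat_real (ball c e) = (\<lambda>x. if x \<in> ball c e then 1 else 0)"
    by (rule ext) (simp add: indicator_def)
  ultimately have "((\<lambda>x. if x \<in> ball c e then 1 else 0) has_integral measure lebesgue (ball c e)) UNIV"
    by simp
  hence "((\<lambda>x::real^'n. 1::real) has_integral measure lebesgue (ball c e)) (ball c e)"
    by (rule has_integral_restrict_UNIV[THEN iffD1])
  thus ?thesis by simp
qed

lemma ball_sub_cbox:
  fixes e :: real
  shows "ball (0::real^'n) e \<subseteq> cbox (- (\<chi> i. e)) (\<chi> i. e)"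
proof
  fix y :: "real^'n" assume "y \<in> ball 0 e"
  hence "norm y < e" by simp
  hence "\<bar>y $ i\<bar> \<le> e" for i using component_le_norm_cart[of y i] by simp
  hence "- e \<le> y $ i \<and> y $ i \<le> e" for i by (metis abs_le_iff minus_le_iff)
  thus "y \<in> cbox (- (\<chi> i. e)) (\<chi> i. e)" by (simp add: mem_box_cart)
qed

lemma ball_twiddle:
  fixes f :: "real^'n \<Rightarrow> real" and g h :: "real^'n \<Rightarrow> real^'n"
  assumes hg: "\<And>x. h (g x) = x" and gh: "\<And>x. g (h x) = x"
    and contg: "\<And>x. continuous (at x) g"
    and boxg: "\<And>u v. \<exists>w z. g ` cbox u v = cbox w z"
    and boxh: "\<And>u v. \<exists>w z. h ` cbox u v = cbox w z"
    and contentg: "\<And>u v. measure lborel (g ` cbox u v) = 1 * measure lborel (cbox u v)"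
    and ballg: "\<And>x. g x \<in> ball 0 e \<longleftrightarrow> x \<in> ball 0 e"
    and hE: "h ` cbox (- (\<chi> i. e)) (\<chi> i. e) = cbox (- (\<chi> i. e)) (\<chi> i. e)"
    and int: "(f has_integral I) (ball 0 e)"
  shows "((\<lambda>x. f (g x)) has_integral I) (ball 0 e)"
proof -
  let ?B = "cbox (- (\<chi> i. e)) (\<chi> i. e) :: (real^'n) set"
  let ?F = "\<lambda>x. if x \<in> ball 0 e then f x else 0"
  have "(?F has_integral I) ?B"
    using int ball_sub_cbox by (subst has_integral_restrict) auto
  from has_integral_twiddle[where r=1, OF _ hg gh contg boxg boxh contentg this]
  have "((\<lambda>x. ?F (g x)) has_integral I) ?B" using hE by simp
  moreover have "(\<lambda>x. ?F (g x)) = (\<lambda>x. if x \<in> ball 0 e then f (g x) else 0)"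
    using ballg by auto
  ultimately have "((\<lambda>x. if x \<in> ball 0 e then f (g x) else 0) has_integral I) ?B" by simp
  thus ?thesis by (rule has_integral_restrict[OF ball_sub_cbox, THEN iffD1])
qed

definition refl_vec :: "'n \<Rightarrow> real^'n \<Rightarrow> real^'n" where
  "refl_vec i x = (\<chi> k. if k = i then - x $ k else x $ k)"

lemma refl_vec_invol [simp]: "refl_vec i (refl_vec i x) = x"
  by (simp add: refl_vec_def vec_eq_iff)

lemma refl_vec_linear: "linear (refl_vec i)"
  by (auto simp: refl_vec_def linear_iff vec_eq_iff)

lemma refl_vec_norm [simp]: "norm (refl_vec i x) = norm x"
  unfolding norm_vec_def L2_set_def refl_vec_def by (simp, intro sum.cong) auto

lemma refl_vec_image_cbox:
  "refl_vec i ` cbox u v = cbox (\<chi> k. if k = i then - v $ k else u $ k) (\<chi> k. if k = i then - u $ k else v $ k)"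
proof -
  have "x \<in> refl_vec i ` cbox u v \<longleftrightarrow> refl_vec i x \<in> cbox u v" for x
    by (metis image_iff refl_vec_invol)
  moreover have "\<forall>k. (u$k \<le> (refl_vec i x)$k \<and> (refl_vec i x)$k \<le> v$k) \<longleftrightarrow>
     ((\<chi> k. if k = i then - v $ k else u $ k)$k \<le> x$k \<and> x$k \<le> (\<chi> k. if k = i then - u $ k else v $ k)$k)" for x
    by (auto simp: refl_vec_def)
  ultimately show ?thesis unfolding mem_box_cart set_eq_iff by blast
qed

lemma refl_vec_content:
  "measure lborel (refl_vec i ` cbox u v) = 1 * measure lborel (cbox u v)"
proof (cases "cbox u v = {}")
  case True thus ?thesis by simp
next
  case False
  hence ne: "refl_vec i ` cbox u v \<noteq> {}" by simp
  show ?thesis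
    unfolding refl_vec_image_cbox
    using ne False unfolding refl_vec_image_cbox
    by (simp add: content_cbox_cart) (intro prod.cong, auto)
qed

lemma integral_ball_refl:
  fixes f :: "real^'n \<Rightarrow> real"
  assumes int: "(f has_integral I) (ball 0 e)"
  shows "((\<lambda>x. f (refl_vec i x)) has_integral I) (ball 0 e)"
proof (rule ball_twiddle[OF refl_vec_invol refl_vec_invol _ _ _ refl_vec_content _ _ int])
  show "continuous (at x) (refl_vec i)" for x
    using refl_vec_linear linear_continuous_at linear_linear by blast
  show "\<exists>w z. refl_vec i ` cbox u v = cbox w z" for u v
    using refl_vec_image_cbox by blast
  thus "\<exists>w z. refl_vec i ` cbox u v = cbox w z" for u v .
  show "refl_vec i x \<in> ball 0 e \<longleftrightarrow> x \<in> ball 0 e" for x by simp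
  show "refl_vec i ` cbox (- (\<chi> i. e)) (\<chi> i. e) = cbox (- (\<chi> i. e)) (\<chi> i. e)"
    unfolding refl_vec_image_cbox by (intro arg_cong2[where f=cbox]) (auto simp: vec_eq_iff)
qed


definition swap_idx :: "'n \<Rightarrow> 'n \<Rightarrow> 'n \<Rightarrow> 'n" where
  "swap_idx i j k = (if k = i then j else if k = j then i else k)"

lemma swap_idx_invol [simp]: "swap_idx i j (swap_idx i j k) = k"
  by (simp add: swap_idx_def)

lemma swap_idx_bij: "bij (swap_idx i j)"
  by (metis bij_betw_imageI inj_on_inverseI surj_def swap_idx_invol)

definition swap_vec :: "'n \<Rightarrow> 'n \<Rightarrow> real^'n \<Rightarrow> real^'n" where
  "swap_vec i j x = (\<chi> k. x $ swap_idx i j k)"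

lemma swap_vec_invol [simp]: "swap_vec i j (swap_vec i j x) = x"
  by (simp add: swap_vec_def vec_eq_iff)

lemma swap_vec_linear: "linear (swap_vec i j)"
  by (auto simp: swap_vec_def linear_iff vec_eq_iff)

lemma sum_swap_idx: "(\<Sum>k\<in>UNIV. f (swap_idx i j k)) = (\<Sum>k\<in>UNIV. (f k :: real))"
  by (rule sum.reindex_bij_witness[of _ "swap_idx i j" "swap_idx i j"]) auto

lemma prod_swap_idx: "(\<Prod>k\<in>UNIV. f (swap_idx i j k)) = (\<Prod>k\<in>UNIV. (f k :: real))"
  by (rule prod.reindex_bij_witness[of _ "swap_idx i j" "swap_idx i j"]) auto

lemma swap_vec_norm [simp]: "norm (swap_vec i j x) = norm x"
  unfolding norm_vec_def L2_set_def swap_vec_def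
  using sum_swap_idx[of "\<lambda>k. (norm (x $ k))\<^sup>2" i j] by simp

lemma swap_vec_image_cbox:
  "swap_vec i j ` cbox u v = cbox (swap_vec i j u) (swap_vec i j v)"
proof -
  have 1: "x \<in> swap_vec i j ` cbox u v \<longleftrightarrow> swap_vec i j x \<in> cbox u v" for x
    apply (rule iffI)
     apply auto[1]
    apply (rule image_eqI[where x="swap_vec i j x"]) by simp_all
  have "swap_vec i j x \<in> cbox u v \<longleftrightarrow> x \<in> cbox (swap_vec i j u) (swap_vec i j v)" for x
  proof
    assume a: "swap_vec i j x \<in> cbox u v"
    show "x \<in> cbox (swap_vec i j u) (swap_vec i j v)"
      unfolding mem_box_cart
    proof
      fix k
      from a have "u $ swap_idx i j k \<le> (swap_vec i j x) $ swap_idx i j k \<and> (swap_vec i j x) $ swap_idx i j k \<le> v $ swap_idx i j k"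
        unfolding mem_box_cart by blast
      thus "swap_vec i j u $ k \<le> x $ k \<and> x $ k \<le> swap_vec i j v $ k" by (simp add: swap_vec_def)
    qed
  next
    assume a: "x \<in> cbox (swap_vec i j u) (swap_vec i j v)"
    show "swap_vec i j x \<in> cbox u v"
      unfolding mem_box_cart
    proof
      fix k
      from a have "(swap_vec i j u) $ swap_idx i j k \<le> x $ swap_idx i j k \<and> x $ swap_idx i j k \<le> (swap_vec i j v) $ swap_idx i j k"
        unfolding mem_box_cart by blast
      thus "u $ k \<le> swap_vec i j x $ k \<and> swap_vec i j x $ k \<le> v $ k" by (simp add: swap_vec_def)
    qed
  qed
  thus ?thesis using 1 by blast
qed

lemma swap_vec_content:
  "measure lborel (swap_vec i j ` cbox u v) = 1 * measure lborel (cbox u v)"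
proof (cases "cbox u v = {}")
  case True thus ?thesis by simp
next
  case False
  hence ne: "swap_vec i j ` cbox u v \<noteq> {}" by simp
  show ?thesis
    using ne False unfolding swap_vec_image_cbox
    using prod_swap_idx[of "\<lambda>k. v $ k - u $ k" i j]
    by (simp add: content_cbox_cart swap_vec_def)
qed

lemma integral_ball_swap:
  fixes f :: "real^'n \<Rightarrow> real"
  assumes int: "(f has_integral I) (ball 0 e)"
  shows "((\<lambda>x. f (swap_vec i j x)) has_integral I) (ball 0 e)"
proof (rule ball_twiddle[OF swap_vec_invol swap_vec_invol _ _ _ swap_vec_content _ _ int])
  show "continuous (at x) (swap_vec i j)" for x
    using swap_vec_linear linear_continuous_at linear_linear by blast
  show "\<exists>w z. swap_vec i j ` cbox u v = cbox w z" for u v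
    using swap_vec_image_cbox by blast
  thus "\<exists>w z. swap_vec i j ` cbox u v = cbox w z" for u v .
  show "swap_vec i j x \<in> ball 0 e \<longleftrightarrow> x \<in> ball 0 e" for x by simp
  show "swap_vec i j ` cbox (- (\<chi> i. e)) (\<chi> i. e) = cbox (- (\<chi> i. e)) (\<chi> i. e)"
    unfolding swap_vec_image_cbox by (intro arg_cong2[where f=cbox]) (auto simp: vec_eq_iff swap_vec_def)
qed


lemma cont_int_ball_poly:
  fixes f :: "real^'n \<Rightarrow> real"
  assumes "continuous_on UNIV f"
  shows "f integrable_on ball c e"
  using assms by (intro cont_int_ball) (auto intro: continuous_on_subset)

lemma mom1: "((\<lambda>y::real^'n. y $ i) has_integral 0) (ball 0 e)"
proof -
  define I where "I = integral (ball (0::real^'n) e) (\<lambda>y. y $ i)"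
  have int: "((\<lambda>y::real^'n. y $ i) has_integral I) (ball 0 e)"
    unfolding I_def by (intro integrable_integral cont_int_ball_poly) (auto intro!: continuous_intros)
  from integral_ball_refl[OF int, of i] have "((\<lambda>y::real^'n. - (y $ i)) has_integral I) (ball 0 e)"
    by (simp add: refl_vec_def)
  moreover from has_integral_neg[OF int] have "((\<lambda>y::real^'n. - (y $ i)) has_integral -I) (ball 0 e)" .
  ultimately have "I = - I" by (rule has_integral_unique)
  hence "I = 0" by simp
  with int show ?thesis by simp
qed

lemma mom2_off:
  assumes "i \<noteq> j"
  shows "((\<lambda>y::real^'n. y $ i * y $ j) has_integral 0) (ball 0 e)"
proof -
  define I where "I = integral (ball (0::real^'n) e) (\<lambda>y. y $ i * y $ j)"
  have int: "((\<lambda>y::real^'n. y $ i * y $ j) has_integral I) (ball 0 e)"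
    unfolding I_def by (intro integrable_integral cont_int_ball_poly) (auto intro!: continuous_intros)
  from integral_ball_refl[OF int, of i] have "((\<lambda>y::real^'n. - (y $ i * y $ j)) has_integral I) (ball 0 e)"
    using assms by (simp add: refl_vec_def)
  moreover from has_integral_neg[OF int] have "((\<lambda>y::real^'n. - (y $ i * y $ j)) has_integral -I) (ball 0 e)" .
  ultimately have "I = - I" by (rule has_integral_unique)
  hence "I = 0" by simp
  with int show ?thesis by simp
qed

lemma mom2_eq:
  "integral (ball 0 e) (\<lambda>y::real^'n. (y $ i)\<^sup>2) = integral (ball 0 e) (\<lambda>y::real^'n. (y $ j)\<^sup>2)"
proof -
  define I where "I = integral (ball (0::real^'n) e) (\<lambda>y. (y $ i)\<^sup>2)"
  have int: "((\<lambda>y::real^'n. (y $ i)\<^sup>2) has_integral I) (ball 0 e)"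
    unfolding I_def by (intro integrable_integral cont_int_ball_poly) (auto intro!: continuous_intros)
  from integral_ball_swap[OF int, of i j] have "((\<lambda>y::real^'n. (y $ j)\<^sup>2) has_integral I) (ball 0 e)"
    by (simp add: swap_vec_def swap_idx_def)
  thus ?thesis unfolding I_def by (simp add: integral_unique)
qed

lemma norm_sq_sum: "(norm (y::real^'n))\<^sup>2 = (\<Sum>i\<in>UNIV. (y $ i)\<^sup>2)"
  unfolding power2_norm_eq_inner inner_vec_def by (simp add: power2_eq_square)


lemma int_norm2_has:
  "((\<lambda>y::real^'n. (norm y)\<^sup>2) has_integral integral (ball 0 r) (\<lambda>y::real^'n. (norm y)\<^sup>2)) (ball 0 r)"
  by (intro integrable_integral cont_int_ball_poly) (auto intro!: continuous_intros)

lemma int_norm2_scale: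
  assumes r: "r > 0"
  shows "integral (ball (0::real^'n) r) (\<lambda>y. (norm y)\<^sup>2) =
           r ^ (CARD('n) + 2) * integral (ball (0::real^'n) 1) (\<lambda>y. (norm y)\<^sup>2)"
proof -
  define I1 where "I1 = integral (ball (0::real^'n) 1) (\<lambda>y. (norm y)\<^sup>2)"
  let ?F = "\<lambda>y::real^'n. if y \<in> ball 0 1 then (norm y)\<^sup>2 else 0"
  have "(?F has_integral I1) (cbox (- (\<chi> i. 1)) (\<chi> i. 1))"
    unfolding I1_def using int_norm2_has[of 1] ball_sub_cbox[of 1]
    by (subst has_integral_restrict) auto
  from has_integral_affinity[OF this, of "1/r" "0::real^'n"]
  have 1: "((\<lambda>x. ?F ((1/r) *\<^sub>R x + 0)) has_integral (r ^ CARD('n)) *\<^sub>R I1)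
           ((\<lambda>x. r *\<^sub>R x) ` cbox (- (\<chi> i. 1)) (\<chi> i. 1))"
    using r by (simp add: power_one_over)
  have 2: "(\<lambda>x. r *\<^sub>R x) ` (cbox (- (\<chi> i. 1)) (\<chi> i. 1) :: (real^'n) set) = cbox (- (\<chi> i. r)) (\<chi> i. (r::real)) "
  proof -
    have ne: "cbox (- (\<chi> i. 1)) (\<chi> i. (1::real)) \<noteq> ({} :: (real^'n) set)"
    proof -
      have "(0::real^'n) \<in> cbox (- (\<chi> i. 1)) (\<chi> i. (1::real))" by (simp add: mem_box_cart)
      thus ?thesis by blast
    qed
    have "(\<lambda>x. r *\<^sub>R x) ` (cbox (- (\<chi> i. 1)) (\<chi> i. 1) :: (real^'n) set) = cbox (r *\<^sub>R - (\<chi> i. 1)) (r *\<^sub>R (\<chi> i. (1::real)))"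
      by (subst image_smult_cbox) (use ne r in auto)
    also have "\<dots> = cbox (- (\<chi> i. r)) (\<chi> i. (r::real))"
      by (intro arg_cong2[where f=cbox]) (auto simp: vec_eq_iff)
    finally show ?thesis .
  qed
  have 3: "(\<lambda>x::real^'n. ?F ((1/r) *\<^sub>R x + 0)) = (\<lambda>x. if x \<in> ball 0 r then (norm x)\<^sup>2 / r\<^sup>2 else 0)"
  proof
    fix x :: "real^'n"
    have "(1/r) *\<^sub>R x \<in> ball 0 1 \<longleftrightarrow> x \<in> ball 0 r"
      using r by (simp add: field_simps)
    moreover have "(norm ((1/r) *\<^sub>R x))\<^sup>2 = (norm x)\<^sup>2 / r\<^sup>2"
      using r by (simp add: power_divide)
    ultimately show "?F ((1/r) *\<^sub>R x + 0) = (if x \<in> ball 0 r then (norm x)\<^sup>2 / r\<^sup>2 else 0)" by simp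
  qed
  from 1 have "((\<lambda>x::real^'n. if x \<in> ball 0 r then (norm x)\<^sup>2 / r\<^sup>2 else 0) has_integral (r ^ CARD('n)) *\<^sub>R I1)
          (cbox (- (\<chi> i. r)) (\<chi> i. r))"
    unfolding 2 3 .
  hence "((\<lambda>x::real^'n. (norm x)\<^sup>2 / r\<^sup>2) has_integral (r ^ CARD('n)) * I1) (ball 0 r)"
    using has_integral_restrict[OF ball_sub_cbox[of r], of "\<lambda>x. (norm x)\<^sup>2 / r\<^sup>2", THEN iffD1] by simp
  from has_integral_mult_right[OF this, of "r\<^sup>2"]
  have "((\<lambda>x::real^'n. (norm x)\<^sup>2) has_integral r\<^sup>2 * ((r ^ CARD('n)) * I1)) (ball 0 r)"
    using r by simp
  hence "integral (ball (0::real^'n) r) (\<lambda>y. (norm y)\<^sup>2) = r\<^sup>2 * ((r ^ CARD('n)) * I1)"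
    by (rule integral_unique)
  thus ?thesis unfolding I1_def by (simp add: power_add algebra_simps power2_eq_square)
qed

lemma norm2_ball_bounds:
  assumes R: "R \<ge> 1"
  shows "integral (ball (0::real^'n) 1) (\<lambda>y. (norm y)\<^sup>2) - measure lborel (ball (0::real^'n) 1) + measure lborel (ball (0::real^'n) R)
           \<le> integral (ball (0::real^'n) R) (\<lambda>y. (norm y)\<^sup>2)"
    and "integral (ball (0::real^'n) R) (\<lambda>y. (norm y)\<^sup>2) \<le>
         integral (ball (0::real^'n) 1) (\<lambda>y. (norm y)\<^sup>2) - R\<^sup>2 * measure lborel (ball (0::real^'n) 1) + R\<^sup>2 * measure lborel (ball (0::real^'n) R)"
proof -
  define I1 where "I1 = integral (ball (0::real^'n) 1) (\<lambda>y. (norm y)\<^sup>2)"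
  define V1 where "V1 = measure lborel (ball (0::real^'n) 1)"
  define VR where "VR = measure lborel (ball (0::real^'n) R)"
  have sub: "ball (0::real^'n) 1 \<subseteq> ball 0 R" using R by auto
  have i1: "((\<lambda>y::real^'n. (norm y)\<^sup>2) has_integral I1) (ball 0 1)"
    unfolding I1_def by (rule int_norm2_has)
  have v1: "((\<lambda>y::real^'n. 1::real) has_integral V1) (ball 0 1)"
    unfolding V1_def by (rule has_integral_one_ball)
  have vR: "((\<lambda>y::real^'n. 1::real) has_integral VR) (ball 0 R)"
    unfolding VR_def by (rule has_integral_one_ball)
  have iR: "((\<lambda>y::real^'n. (norm y)\<^sup>2) has_integral integral (ball (0::real^'n) R) (\<lambda>y. (norm y)\<^sup>2)) (ball 0 R)"
    by (rule int_norm2_has)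
  {
    fix c :: real
    have "((\<lambda>y::real^'n. (norm y)\<^sup>2 - c) has_integral I1 - c * V1) (ball 0 1)"
      using has_integral_diff[OF i1 has_integral_mult_right[OF v1, of c]] by simp
    hence "((\<lambda>y::real^'n. if y \<in> ball 0 1 then (norm y)\<^sup>2 - c else 0) has_integral I1 - c * V1) (ball 0 R)"
      by (rule has_integral_restrict[OF sub, THEN iffD2])
    from has_integral_add[OF this has_integral_mult_right[OF vR, of c]]
    have "((\<lambda>y::real^'n. (if y \<in> ball 0 1 then (norm y)\<^sup>2 - c else 0) + c) has_integral I1 - c * V1 + c * VR) (ball 0 R)"
      by simp
  } note gen = this
  show "integral (ball (0::real^'n) 1) (\<lambda>y. (norm y)\<^sup>2) - measure lborel (ball (0::real^'n) 1) + measure lborel (ball (0::real^'n) R)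
           \<le> integral (ball (0::real^'n) R) (\<lambda>y. (norm y)\<^sup>2)"
  proof -
    have "I1 - 1 * V1 + 1 * VR \<le> integral (ball (0::real^'n) R) (\<lambda>y. (norm y)\<^sup>2)"
    proof (rule has_integral_le[OF gen[of 1] iR])
      fix y :: "real^'n" assume "y \<in> ball 0 R"
      show "(if y \<in> ball 0 1 then (norm y)\<^sup>2 - 1 else 0) + 1 \<le> (norm y)\<^sup>2"
      proof (cases "y \<in> ball 0 1")
        case False hence "1 \<le> norm y" by simp
        hence "1 \<le> (norm y)\<^sup>2" by (metis one_le_power)
        thus ?thesis using False by simp
      qed simp
    qed
    thus ?thesis unfolding I1_def V1_def VR_def by simp
  qed
  show "integral (ball (0::real^'n) R) (\<lambda>y. (norm y)\<^sup>2) \<le>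
         integral (ball (0::real^'n) 1) (\<lambda>y. (norm y)\<^sup>2) - R\<^sup>2 * measure lborel (ball (0::real^'n) 1) + R\<^sup>2 * measure lborel (ball (0::real^'n) R)"
  proof -
    have "integral (ball (0::real^'n) R) (\<lambda>y. (norm y)\<^sup>2) \<le> I1 - R\<^sup>2 * V1 + R\<^sup>2 * VR"
    proof (rule has_integral_le[OF iR gen[of "R\<^sup>2"]])
      fix y :: "real^'n" assume y: "y \<in> ball 0 R"
      show "(norm y)\<^sup>2 \<le> (if y \<in> ball 0 1 then (norm y)\<^sup>2 - R\<^sup>2 else 0) + R\<^sup>2"
      proof (cases "y \<in> ball 0 1")
        case False have "norm y \<le> R" using y by simp
        hence "(norm y)\<^sup>2 \<le> R\<^sup>2" by (simp add: power_mono)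
        thus ?thesis using False by simp
      qed simp
    qed
    thus ?thesis unfolding I1_def V1_def VR_def by simp
  qed
qed

lemma pow_quot_lim:
  "((\<lambda>h. ((1 + h) ^ k - 1) / h) \<longlongrightarrow> real k) (at_right (0::real))"
proof -
  have "DERIV (\<lambda>x::real. x ^ k) 1 :> real k"
    by (auto intro!: derivative_eq_intros)
  hence "((\<lambda>h. ((1 + h) ^ k - 1 ^ k) / h) \<longlongrightarrow> real k) (at (0::real))"
    unfolding DERIV_def by simp
  hence "((\<lambda>h. ((1 + h) ^ k - 1) / h) \<longlongrightarrow> real k) (at (0::real))" by simp
  thus ?thesis by (simp add: filterlim_at_split)
qed

lemma unit_ball_norm2:
  "integral (ball (0::real^'n) 1) (\<lambda>y. (norm y)\<^sup>2) =
     real CARD('n) / (real CARD('n) + 2) * measure lborel (ball (0::real^'n) 1)"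
proof -
  define n where "n = CARD('n)"
  define I1 where "I1 = integral (ball (0::real^'n) 1) (\<lambda>y. (norm y)\<^sup>2)"
  define V1 where "V1 = measure lborel (ball (0::real^'n) 1)"
  have key: "(1+h)^n * V1 - V1 \<le> (1+h)^(n+2) * I1 - I1 \<and> (1+h)^(n+2) * I1 - I1 \<le> (1+h)\<^sup>2 * ((1+h)^n * V1) - (1+h)\<^sup>2 * V1"
    if h: "h > 0" for h :: real
  proof -
    have R: "1 + h \<ge> 1" "1 + h > 0" using h by auto
    have IR: "integral (ball (0::real^'n) (1+h)) (\<lambda>y. (norm y)\<^sup>2) = (1+h)^(n+2) * I1"
      unfolding I1_def n_def using int_norm2_scale[OF R(2)] by simp
    have VR: "measure lborel (ball (0::real^'n) (1+h)) = (1+h)^n * V1"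
      unfolding V1_def n_def using content_ball_conv_unit_ball[of "1+h" "0::real^'n"] R by simp
    note A = norm2_ball_bounds(1)[OF R(1), where 'n='n]
    note B = norm2_ball_bounds(2)[OF R(1), where 'n='n]
    have C: "(1+h)\<^sup>2 * measure lborel (ball (0::real^'n) (1+h)) = (1+h)\<^sup>2 * ((1+h)^n * V1)"
      using VR by simp
    have D: "(1+h)\<^sup>2 * measure lborel (ball (0::real^'n) 1) = (1+h)\<^sup>2 * V1"
      unfolding V1_def ..
    show ?thesis using A B C D IR VR unfolding I1_def[symmetric] V1_def[symmetric] by linarith
  qed
  have ev: "eventually (\<lambda>h. h > 0) (at_right (0::real))"
    by (simp add: eventually_at_right_less)
  have lo: "real n * V1 \<le> real (n+2) * I1"
  proof (rule tendsto_le[OF trivial_limit_at_right_real])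
    show "((\<lambda>h. ((1 + h) ^ (n+2) - 1) / h * I1) \<longlongrightarrow> real (n+2) * I1) (at_right 0)"
      by (intro tendsto_mult pow_quot_lim tendsto_const)
    show "((\<lambda>h. ((1 + h) ^ n - 1) / h * V1) \<longlongrightarrow> real n * V1) (at_right 0)"
      by (intro tendsto_mult pow_quot_lim tendsto_const)
    show "eventually (\<lambda>h. ((1 + h) ^ n - 1) / h * V1 \<le> ((1 + h) ^ (n+2) - 1) / h * I1) (at_right 0)"
      using ev
    proof (rule eventually_mono)
      fix h :: real assume h: "h > 0"
      from key[OF h] have "((1+h)^n - 1) * V1 / h \<le> ((1+h)^(n+2) - 1) * I1 / h"
        using h by (intro divide_right_mono) (auto simp: left_diff_distrib)
      thus "((1 + h) ^ n - 1) / h * V1 \<le> ((1 + h) ^ (n+2) - 1) / h * I1" by simp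
    qed
  qed
  have hi: "real (n+2) * I1 \<le> real n * V1"
  proof (rule tendsto_le[OF trivial_limit_at_right_real])
    show "((\<lambda>h. ((1 + h) ^ (n+2) - 1) / h * I1) \<longlongrightarrow> real (n+2) * I1) (at_right 0)"
      by (intro tendsto_mult pow_quot_lim tendsto_const)
    have "((\<lambda>h. (1 + h)\<^sup>2 * (((1 + h) ^ n - 1) / h * V1)) \<longlongrightarrow> (1 + 0)\<^sup>2 * (real n * V1)) (at_right 0)"
      by (intro tendsto_mult pow_quot_lim tendsto_const tendsto_power tendsto_add tendsto_ident_at)
    thus "((\<lambda>h. (1 + h)\<^sup>2 * (((1 + h) ^ n - 1) / h * V1)) \<longlongrightarrow> real n * V1) (at_right 0)" by simp
    show "eventually (\<lambda>h. ((1 + h) ^ (n+2) - 1) / h * I1 \<le> (1 + h)\<^sup>2 * (((1 + h) ^ n - 1) / h * V1)) (at_right 0)"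
      using ev
    proof (rule eventually_mono)
      fix h :: real assume h: "h > 0"
      from key[OF h] have "((1+h)^(n+2) - 1) * I1 / h \<le> (1+h)\<^sup>2 * ((1+h)^n - 1) * V1 / h"
        using h by (intro divide_right_mono) (auto simp: left_diff_distrib right_diff_distrib mult.assoc)
      thus "((1 + h) ^ (n+2) - 1) / h * I1 \<le> (1 + h)\<^sup>2 * (((1 + h) ^ n - 1) / h * V1)" by simp
    qed
  qed
  from lo hi have "real (n+2) * I1 = real n * V1" by linarith
  hence "I1 = real n / (real n + 2) * V1" by (simp add: field_simps)
  thus ?thesis unfolding I1_def V1_def n_def .
qed

lemma ball_norm2:
  assumes e: "e > 0"
  shows "integral (ball (0::real^'n) e) (\<lambda>y. (norm y)\<^sup>2) =
     real CARD('n) / (real CARD('n) + 2) * e\<^sup>2 * measure lborel (ball (0::real^'n) e)"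
proof -
  have "integral (ball (0::real^'n) e) (\<lambda>y. (norm y)\<^sup>2) = e ^ (CARD('n) + 2) * integral (ball (0::real^'n) 1) (\<lambda>y. (norm y)\<^sup>2)"
    by (rule int_norm2_scale[OF e])
  also have "\<dots> = e ^ (CARD('n) + 2) * (real CARD('n) / (real CARD('n) + 2) * measure lborel (ball (0::real^'n) 1))"
    by (simp add: unit_ball_norm2)
  also have "measure lborel (ball (0::real^'n) e) = e ^ CARD('n) * measure lborel (ball (0::real^'n) 1)"
    using content_ball_conv_unit_ball[of e "0::real^'n"] e by simp
  ultimately show ?thesis by (simp add: power_add power2_eq_square)
qed


lemma mom2_diag:
  assumes e: "e > 0"
  shows "((\<lambda>y::real^'n. (y $ i)\<^sup>2) has_integral e\<^sup>2 / (real CARD('n) + 2) * measure lborel (ball (0::real^'n) e)) (ball 0 e)"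
proof -
  define c where "c = integral (ball (0::real^'n) e) (\<lambda>y. (y $ i)\<^sup>2)"
  have intk: "(\<lambda>y::real^'n. (y $ k)\<^sup>2) integrable_on ball 0 e" for k
    by (intro cont_int_ball_poly) (auto intro!: continuous_intros)
  have "integral (ball (0::real^'n) e) (\<lambda>y. (norm y)\<^sup>2) = integral (ball (0::real^'n) e) (\<lambda>y. \<Sum>k\<in>UNIV. (y $ k)\<^sup>2)"
    by (simp add: norm_sq_sum)
  also have "\<dots> = (\<Sum>k\<in>UNIV. integral (ball (0::real^'n) e) (\<lambda>y. (y $ k)\<^sup>2))"
    by (rule integral_sum) (auto intro: intk)
  also have "\<dots> = (\<Sum>k\<in>(UNIV::'n set). c)"
    unfolding c_def by (intro sum.cong refl mom2_eq)
  also have "\<dots> = real CARD('n) * c" by simp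
  finally have "real CARD('n) * c = real CARD('n) / (real CARD('n) + 2) * e\<^sup>2 * measure lborel (ball (0::real^'n) e)"
    using ball_norm2[where 'n='n, OF e] by simp
  also have "real CARD('n) / (real CARD('n) + 2) * e\<^sup>2 * measure lborel (ball (0::real^'n) e)
     = real CARD('n) * (e\<^sup>2 / (real CARD('n) + 2) * measure lborel (ball (0::real^'n) e))" by simp
  finally have X: "real CARD('n) * c = real CARD('n) * (e\<^sup>2 / (real CARD('n) + 2) * measure lborel (ball (0::real^'n) e))" .
  have "c = e\<^sup>2 / (real CARD('n) + 2) * measure lborel (ball (0::real^'n) e)"
    using X by (subst (asm) mult_left_cancel) auto
  moreover have "((\<lambda>y::real^'n. (y $ i)\<^sup>2) has_integral c) (ball 0 e)"
    unfolding c_def using intk by (rule integrable_integral)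
  ultimately show ?thesis by simp
qed

lemma quad_form_int:
  fixes P :: "real^'n^'n"
  assumes e: "e > 0"
  shows "((\<lambda>y::real^'n. y \<bullet> (P *v y)) has_integral
            e\<^sup>2 / (real CARD('n) + 2) * measure lborel (ball (0::real^'n) e) * trace P) (ball 0 e)"
proof -
  define c where "c = e\<^sup>2 / (real CARD('n) + 2) * measure lborel (ball (0::real^'n) e)"
  have eq: "y \<bullet> (P *v y) = (\<Sum>i\<in>UNIV. \<Sum>j\<in>UNIV. P $ i $ j * (y $ i * y $ j))" for y :: "real^'n"
    by (simp add: inner_vec_def matrix_vector_mult_def sum_distrib_left algebra_simps)
  have trm: "((\<lambda>y::real^'n. P $ i $ j * (y $ i * y $ j)) has_integral (if i = j then P $ i $ j * c else 0)) (ball 0 e)" for i j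
  proof (cases "i = j")
    case True
    from has_integral_mult_right[OF mom2_diag[OF e, of i], of "P $ i $ j"] True show ?thesis
      unfolding c_def by (simp add: power2_eq_square)
  next
    case False
    from has_integral_mult_right[OF mom2_off[OF False, of e], of "P $ i $ j"] False show ?thesis by simp
  qed
  have "((\<lambda>y::real^'n. \<Sum>i\<in>UNIV. \<Sum>j\<in>UNIV. P $ i $ j * (y $ i * y $ j)) has_integral
          (\<Sum>i\<in>UNIV. \<Sum>j\<in>UNIV. (if i = j then P $ i $ j * c else 0))) (ball 0 e)"
    by (intro has_integral_sum trm) simp_all
  moreover have "(\<Sum>i\<in>UNIV. \<Sum>j\<in>UNIV. (if i = j then P $ i $ j * c else 0)) = c * trace P"
    by (simp add: trace_def sum_distrib_left mult.commute)
  ultimately show ?thesis unfolding eq c_def by simp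
qed

lemma lin_form_int:
  fixes w :: "real^'n"
  shows "((\<lambda>y::real^'n. w \<bullet> y) has_integral 0) (ball 0 e)"
proof -
  have "((\<lambda>y::real^'n. \<Sum>i\<in>UNIV. w $ i * y $ i) has_integral (\<Sum>i\<in>(UNIV::'n set). 0)) (ball 0 e)"
  proof (intro has_integral_sum, simp)
    fix i :: 'n
    show "((\<lambda>y::real^'n. w $ i * y $ i) has_integral 0) (ball 0 e)"
      using has_integral_mult_right[OF mom1[of i e], of "w$i"] by simp
  qed
  thus ?thesis by (simp add: inner_vec_def)
qed

definition L1m :: "real^'n^'m \<Rightarrow> real" where
  "L1m A = (\<Sum>i\<in>UNIV. \<Sum>j\<in>UNIV. \<bar>A $ i $ j\<bar>)"

lemma norm_mv_le: "norm ((A::real^'n^'m) *v x) \<le> L1m A * norm x"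
proof -
  have "norm (A *v x) \<le> (\<Sum>i\<in>UNIV. \<bar>(A *v x) $ i\<bar>)"
    by (rule norm_le_l1_cart)
  also have "\<dots> \<le> (\<Sum>i\<in>UNIV. \<Sum>j\<in>UNIV. \<bar>A $ i $ j\<bar> * norm x)"
  proof (rule sum_mono)
    fix i
    have "\<bar>(A *v x) $ i\<bar> \<le> \<bar>\<Sum>j\<in>UNIV. A $ i $ j * x $ j\<bar>"
      by (simp add: matrix_vector_mult_def)
    also have "\<dots> \<le> (\<Sum>j\<in>UNIV. \<bar>A $ i $ j * x $ j\<bar>)"
      by (rule sum_abs)
    also have "\<dots> \<le> (\<Sum>j\<in>UNIV. \<bar>A $ i $ j\<bar> * norm x)"
      by (rule sum_mono) (simp add: abs_mult component_le_norm_cart mult_left_mono)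
    finally show "\<bar>(A *v x) $ i\<bar> \<le> (\<Sum>j\<in>UNIV. \<bar>A $ i $ j\<bar> * norm x)" .
  qed
  finally show ?thesis by (simp add: L1m_def sum_distrib_right)
qed

lemma L1m_le_norm: "L1m (A::real^'n^'m) \<le> real CARD('m) * real CARD('n) * norm A"
proof -
  have "\<bar>A $ i $ j\<bar> \<le> norm A" for i j
    using component_le_norm_cart[of "A $ i" j] Finite_Cartesian_Product.norm_nth_le[of A i] by simp
  hence "L1m A \<le> (\<Sum>i\<in>(UNIV::'m set). \<Sum>j\<in>(UNIV::'n set). norm A)"
    unfolding L1m_def by (intro sum_mono) auto
  thus ?thesis by simp
qed

lemma taylor2:
  fixes phi :: "real^'n \<Rightarrow> real \<Rightarrow> real" and Dphi :: "real^'n \<Rightarrow> real \<Rightarrow> real^'n"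
    and D2phi :: "real^'n \<Rightarrow> real \<Rightarrow> real^'n^'n"
  assumes der: "\<And>r. r \<in> {0..1} \<Longrightarrow>
      ((\<lambda>y. phi y s) has_derivative (\<lambda>k. Dphi (z + r *\<^sub>R h) s \<bullet> k)) (at (z + r *\<^sub>R h)) \<and>
      ((\<lambda>y. Dphi y s) has_derivative (\<lambda>k. D2phi (z + r *\<^sub>R h) s *v k)) (at (z + r *\<^sub>R h))"
    and bnd: "\<And>r. r \<in> {0..1} \<Longrightarrow> L1m (D2phi (z + r *\<^sub>R h) s - M) \<le> \<omega>"
  shows "\<bar>phi (z + h) s - phi z s - Dphi z s \<bullet> h - ((M *v h) \<bullet> h) / 2\<bar> \<le> \<omega> * (norm h)\<^sup>2 / 2"
proof -
  define diff :: "nat \<Rightarrow> real \<Rightarrow> real" where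
    "diff = (\<lambda>m r. if m = 0 then phi (z + r *\<^sub>R h) s else if m = 1 then Dphi (z + r *\<^sub>R h) s \<bullet> h
                     else (D2phi (z + r *\<^sub>R h) s *v h) \<bullet> h)"
  have lin: "((\<lambda>r::real. z + r *\<^sub>R h) has_derivative (\<lambda>r'. r' *\<^sub>R h)) (at r)" for r
    by (auto intro!: derivative_eq_intros)
  have d0: "DERIV (diff 0) r :> diff 1 r" if "r \<in> {0..1}" for r
  proof -
    have "((\<lambda>r. phi (z + r *\<^sub>R h) s) has_derivative (\<lambda>r'. Dphi (z + r *\<^sub>R h) s \<bullet> (r' *\<^sub>R h))) (at r)"
      using has_derivative_compose[OF lin conjunct1[OF der[OF that]]] by simp
    moreover have "(\<lambda>r'. Dphi (z + r *\<^sub>R h) s \<bullet> (r' *\<^sub>R h)) = (*) (Dphi (z + r *\<^sub>R h) s \<bullet> h)"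
      by (rule ext) (simp add: mult.commute)
    ultimately show ?thesis unfolding has_field_derivative_def diff_def by simp
  qed
  have d1: "DERIV (diff 1) r :> diff 2 r" if "r \<in> {0..1}" for r
  proof -
    have "((\<lambda>r. Dphi (z + r *\<^sub>R h) s) has_derivative (\<lambda>r'. D2phi (z + r *\<^sub>R h) s *v (r' *\<^sub>R h))) (at r)"
      using has_derivative_compose[OF lin conjunct2[OF der[OF that]]] by simp
    from bounded_linear.has_derivative[OF bounded_linear_inner_left this, of h]
    have "((\<lambda>r. Dphi (z + r *\<^sub>R h) s \<bullet> h) has_derivative (\<lambda>r'. (D2phi (z + r *\<^sub>R h) s *v (r' *\<^sub>R h)) \<bullet> h)) (at r)" .
    moreover have "(\<lambda>r'. (D2phi (z + r *\<^sub>R h) s *v (r' *\<^sub>R h)) \<bullet> h) = (*) ((D2phi (z + r *\<^sub>R h) s *v h) \<bullet> h)"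
      by (rule ext) (simp add: mult.commute matrix_vector_mult_scaleR)
    ultimately show ?thesis unfolding has_field_derivative_def diff_def by simp
  qed
  have "\<exists>t. (if (1::real) < 0 then 1 < t \<and> t < 0 else 0 < t \<and> t < 1) \<and>
    diff 0 1 = (\<Sum>m<2. (diff m 0 / fact m) * (1 - 0)^m) + (diff 2 t / fact 2) * (1 - 0)^2"
  proof (rule Taylor[of 2 diff "diff 0" 0 1 0 1])
    show "\<forall>m t. m < 2 \<and> 0 \<le> t \<and> t \<le> 1 \<longrightarrow> DERIV (diff m) t :> diff (Suc m) t"
    proof (intro allI impI)
      fix m :: nat and t :: real assume a: "m < 2 \<and> 0 \<le> t \<and> t \<le> 1"
      hence "m = 0 \<or> m = 1" by auto
      thus "DERIV (diff m) t :> diff (Suc m) t" using d0 d1 a by (auto simp: numeral_2_eq_2)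
    qed
  qed auto
  then obtain \<xi> where \<xi>: "0 < \<xi>" "\<xi> < 1"
    and eq: "diff 0 1 = (\<Sum>m<2. (diff m 0 / fact m) * (1 - 0)^m) + (diff 2 \<xi> / fact 2) * (1 - 0)^2"
    by auto
  have eq2: "phi (z + h) s = phi z s + Dphi z s \<bullet> h + ((D2phi (z + \<xi> *\<^sub>R h) s *v h) \<bullet> h) / 2"
    using eq by (simp add: diff_def numeral_2_eq_2)
  have "\<bar>((D2phi (z + \<xi> *\<^sub>R h) s *v h) \<bullet> h) - ((M *v h) \<bullet> h)\<bar> = \<bar>((D2phi (z + \<xi> *\<^sub>R h) s - M) *v h) \<bullet> h\<bar>"
    by (simp add: matrix_vector_mult_diff_rdistrib inner_diff_left)
  also have "\<dots> \<le> norm ((D2phi (z + \<xi> *\<^sub>R h) s - M) *v h) * norm h"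
    by (rule Cauchy_Schwarz_ineq2)
  also have "\<dots> \<le> (L1m (D2phi (z + \<xi> *\<^sub>R h) s - M) * norm h) * norm h"
    by (intro mult_right_mono norm_mv_le) auto
  also have "\<dots> \<le> (\<omega> * norm h) * norm h"
    using bnd[of \<xi>] \<xi> by (intro mult_right_mono) auto
  finally have X: "\<bar>((D2phi (z + \<xi> *\<^sub>R h) s *v h) \<bullet> h) - ((M *v h) \<bullet> h)\<bar> \<le> \<omega> * (norm h)\<^sup>2"
    by (simp add: power2_eq_square mult.assoc)
  have E: "phi (z + h) s - phi z s - Dphi z s \<bullet> h - ((M *v h) \<bullet> h) / 2
      = (((D2phi (z + \<xi> *\<^sub>R h) s *v h) \<bullet> h) - ((M *v h) \<bullet> h)) / 2"
    using eq2 by (simp add: field_simps)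
  show ?thesis unfolding E using X by simp
qed


lemma param_int_cont:
  fixes psi :: "real^'n \<Rightarrow> real \<Rightarrow> real"
  assumes cont: "continuous_on (cball 0 e \<times> {a..b}) (\<lambda>(y,s). psi y s)"
  shows "continuous_on {a..b} (\<lambda>s. integral (ball 0 e) (\<lambda>y. psi y s))"
  unfolding continuous_on_iff
proof (intro ballI allI impI)
  fix s0 and \<eta> :: real assume s0: "s0 \<in> {a..b}" and \<eta>: "\<eta> > 0"
  have uc: "uniformly_continuous_on (cball 0 e \<times> {a..b}) (\<lambda>(y,s). psi y s)"
    by (intro compact_uniformly_continuous cont compact_Times) auto
  have intg: "(\<lambda>y. psi y s) integrable_on ball 0 e" if "s \<in> {a..b}" for s
  proof (rule cont_int_ball)
    have "continuous_on (cball 0 e) (\<lambda>y. (\<lambda>(y,s). psi y s) (y, s))"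
      by (rule continuous_on_compose2[OF cont]) (use that in \<open>auto intro!: continuous_intros\<close>)
    thus "continuous_on (cball 0 e) (\<lambda>y. psi y s)" by simp
  qed
  define V where "V = measure lborel (ball (0::real^'n) e)"
  have V: "V \<ge> 0" unfolding V_def by simp
  define \<eta>' where "\<eta>' = \<eta> / (V + 1)"
  have \<eta>': "\<eta>' > 0" unfolding \<eta>'_def using \<eta> V by simp
  from uc[unfolded uniformly_continuous_on_def, rule_format, OF \<eta>'] obtain d where d: "d > 0"
    and dd: "\<And>p p'. p \<in> cball 0 e \<times> {a..b} \<Longrightarrow> p' \<in> cball 0 e \<times> {a..b} \<Longrightarrow> dist p' p < d \<Longrightarrow>
       dist ((\<lambda>(y,s). psi y s) p') ((\<lambda>(y,s). psi y s) p) < \<eta>'"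
    by metis
  show "\<exists>d>0. \<forall>s\<in>{a..b}. dist s s0 < d \<longrightarrow>
          dist (integral (ball 0 e) (\<lambda>y. psi y s)) (integral (ball 0 e) (\<lambda>y. psi y s0)) < \<eta>"
  proof (intro exI[of _ d] conjI ballI impI d)
    fix s assume s: "s \<in> {a..b}" and ds: "dist s s0 < d"
    have pt: "\<bar>psi y s - psi y s0\<bar> \<le> \<eta>'" if "y \<in> ball 0 e" for y
    proof -
      have "dist (y, s) (y, s0) < d" using ds by (simp add: dist_Pair_Pair)
      from dd[OF _ _ this] that s s0 show ?thesis by (auto simp: dist_real_def)
    qed
    have "dist (integral (ball 0 e) (\<lambda>y. psi y s)) (integral (ball 0 e) (\<lambda>y. psi y s0))
        = norm (integral (ball 0 e) (\<lambda>y. psi y s - psi y s0))"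
      using integral_diff[OF intg[OF s] intg[OF s0]] by (simp add: dist_norm)
    also have "\<dots> \<le> integral (ball 0 e) (\<lambda>y::real^'n. \<eta>')"
      by (rule integral_norm_bound_integral) (auto intro: integrable_diff intg[OF s] intg[OF s0] pt integrable_on_const)
    also have "\<dots> = \<eta>' * V"
      using has_integral_mult_left[OF has_integral_one_ball[of "0::real^'n" e], of \<eta>']
      unfolding V_def by (simp add: integral_unique)
    also have "\<dots> < \<eta>"
      unfolding \<eta>'_def using \<eta> V by (simp add: field_simps)
    finally show "dist (integral (ball 0 e) (\<lambda>y. psi y s)) (integral (ball 0 e) (\<lambda>y. psi y s0)) < \<eta>" .
  qed
qed

lemma inner_mv_transpose: "(w::real^'n) \<bullet> ((A::real^'m^'n) *v y) = (transpose A *v w) \<bullet> y"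
  by (simp add: inner_vec_def matrix_vector_mult_def transpose_def sum_distrib_left sum_distrib_right
      algebra_simps) (rule sum.swap)

lemma quad_transpose:
  "((M::real^'n^'n) *v ((A::real^'n^'n) *v y)) \<bullet> (A *v y) = y \<bullet> ((transpose A ** M ** A) *v y)"
proof -
  have "(M *v (A *v y)) \<bullet> (A *v y) = (transpose A *v (M *v (A *v y))) \<bullet> y"
    using inner_mv_transpose[of "M *v (A *v y)" A y] by (simp add: inner_commute)
  also have "\<dots> = ((transpose A ** M ** A) *v y) \<bullet> y"
    by (simp add: matrix_vector_mul_assoc matrix_mul_assoc)
  finally show ?thesis by (simp add: inner_commute)
qed


lemma cont_mv_fst: "continuous_on X (\<lambda>p. (A::real^'n^'m) *v fst p)"
proof -
  have "continuous_on UNIV ((*v) A)"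
    by (simp add: linear_continuous_on matrix_vector_mul_linear linear_linear)
  thus ?thesis by (rule continuous_on_compose2) (auto intro: continuous_on_fst continuous_on_id)
qed

lemma dist_pair_le: "dist (a, b) (c, d) \<le> dist a c + dist b d"
  unfolding dist_Pair_Pair by (rule sqrt_sum_squares_le_sum) auto

lemma expansion:
  fixes phi :: "real^'n \<Rightarrow> real \<Rightarrow> real" and phit :: "real^'n \<Rightarrow> real \<Rightarrow> real"
    and Dphi :: "real^'n \<Rightarrow> real \<Rightarrow> real^'n" and D2phi :: "real^'n \<Rightarrow> real \<Rightarrow> real^'n^'n"
  assumes \<Omega>: "open \<Omega>" and x: "x \<in> \<Omega>" and t: "t \<in> {t1<..<t2}"
    and C21: "C21_on (\<Omega> \<times> {t1<..<t2}) phi phit Dphi D2phi"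
    and K: "K > 0" and \<delta>: "\<delta> > 0"
  shows "\<exists>\<epsilon>0>0. \<forall>\<epsilon> (A::real^'n^'n) b. 0 < \<epsilon> \<and> \<epsilon> < \<epsilon>0 \<and> norm A \<le> K \<and> 0 < b \<and> b \<le> K \<longrightarrow>
     \<bar>(1 / (b / (real CARD('n) + 2) * \<epsilon>\<^sup>2)) * integral {t - b / (real CARD('n) + 2) * \<epsilon>\<^sup>2 .. t}
          (\<lambda>s. (1 / measure lborel (ball (0::real^'n) \<epsilon>)) * integral (ball 0 \<epsilon>) (\<lambda>y. phi (x + A *v y) s))
       - phi x t - \<epsilon>\<^sup>2 / (2 * (real CARD('n) + 2)) * (trace (transpose A ** D2phi x t ** A) - b * phit x t)\<bar>
       \<le> \<delta> * \<epsilon>\<^sup>2"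
proof -
  define n where "n = real CARD('n)"
  have n: "n \<ge> 1" unfolding n_def by simp
  define S where "S = \<Omega> \<times> {t1<..<t2}"
  have S: "open S" unfolding S_def using \<Omega> by (auto intro: open_Times)
  have xt: "(x, t) \<in> S" unfolding S_def using x t by auto
  define M where "M = D2phi x t"
  define C where "C = n * n * K"
  have C: "C > 0" unfolding C_def using n K by simp
  define \<omega> where "\<omega> = \<delta> / C\<^sup>2"
  have \<omega>: "\<omega> > 0" unfolding \<omega>_def using \<delta> C by simp
  define \<delta>' where "\<delta>' = \<delta> / (2 * K)"
  have \<delta>': "\<delta>' > 0" unfolding \<delta>'_def using \<delta> K by simp
  have Cd: "\<And>z s. (z, s) \<in> S \<Longrightarrow> ((\<lambda>s'. phi z s') has_real_derivative phit z s) (at s) \<and>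
        ((\<lambda>y. phi y s) has_derivative (\<lambda>h. Dphi z s \<bullet> h)) (at z) \<and>
        ((\<lambda>y. Dphi y s) has_derivative (\<lambda>h. D2phi z s *v h)) (at z)"
    using C21 unfolding C21_on_def S_def by auto
  have contphi: "continuous_on S (\<lambda>(z, s). phi z s)"
    using C21 unfolding C21_on_def S_def by auto
  have contD2: "continuous_on S (\<lambda>(z, s). D2phi z s)"
    using C21 unfolding C21_on_def S_def by auto
  obtain \<rho>0 where \<rho>0: "\<rho>0 > 0" "ball (x, t) \<rho>0 \<subseteq> S"
    using S xt open_contains_ball by blast
  have pos1: "\<omega> / (n * n) > 0" using \<omega> n by simp
  have "\<forall>x\<in>S. \<forall>\<epsilon>>0. \<exists>\<delta>>0. \<forall>x'\<in>S. dist x' x < \<delta> \<longrightarrow> dist ((\<lambda>(z, s). D2phi z s) x') ((\<lambda>(z, s). D2phi z s) x) < \<epsilon>"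
    using contD2 unfolding continuous_on_iff .
  hence "\<exists>\<delta>>0. \<forall>x'\<in>S. dist x' (x, t) < \<delta> \<longrightarrow> dist ((\<lambda>(z, s). D2phi z s) x') ((\<lambda>(z, s). D2phi z s) (x, t)) < \<omega> / (n * n)"
    using xt pos1 by blast
  then obtain \<rho>1 where \<rho>1: "\<rho>1 > 0"
    and \<rho>1'': "\<forall>x'\<in>S. dist x' (x, t) < \<rho>1 \<longrightarrow> dist ((\<lambda>(z, s). D2phi z s) x') ((\<lambda>(z, s). D2phi z s) (x, t)) < \<omega> / (n * n)"
    by blast
  have \<rho>1': "dist (D2phi z s) M < \<omega> / (n * n)" if "(z, s) \<in> S" "dist (z, s) (x, t) < \<rho>1" for z s
    using \<rho>1'' that unfolding M_def by fastforce
  obtain \<rho>2 where \<rho>2: "\<rho>2 > 0"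
    and \<rho>2': "\<And>s. norm (s - t) < \<rho>2 \<Longrightarrow> norm (phi x s - phi x t - phit x t * (s - t)) \<le> \<delta>' * norm (s - t)"
  proof -
    have "((\<lambda>s'. phi x s') has_derivative (*) (phit x t)) (at t)"
      using Cd[OF xt] by (simp add: has_field_derivative_def)
    from this[unfolded has_derivative_at_alt] \<delta>' that show ?thesis by blast
  qed
  define \<rho> where "\<rho> = min \<rho>0 (min \<rho>1 \<rho>2)"
  have \<rho>: "\<rho> > 0" unfolding \<rho>_def using \<rho>0 \<rho>1 \<rho>2 by simp
  define \<epsilon>0 where "\<epsilon>0 = min 1 (\<rho> / (C + K))"
  have \<epsilon>0: "\<epsilon>0 > 0" unfolding \<epsilon>0_def using \<rho> C K by simp
  have MAIN: "\<forall>\<epsilon> (A::real^'n^'n) b. 0 < \<epsilon> \<and> \<epsilon> < \<epsilon>0 \<and> norm A \<le> K \<and> 0 < b \<and> b \<le> K \<longrightarrow>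
     \<bar>(1 / (b / (real CARD('n) + 2) * \<epsilon>\<^sup>2)) * integral {t - b / (real CARD('n) + 2) * \<epsilon>\<^sup>2 .. t}
          (\<lambda>s. (1 / measure lborel (ball (0::real^'n) \<epsilon>)) * integral (ball 0 \<epsilon>) (\<lambda>y. phi (x + A *v y) s))
       - phi x t - \<epsilon>\<^sup>2 / (2 * (real CARD('n) + 2)) * (trace (transpose A ** D2phi x t ** A) - b * phit x t)\<bar>
       \<le> \<delta> * \<epsilon>\<^sup>2"
  proof (intro allI impI)
    fix \<epsilon> and A :: "real^'n^'n" and b :: real
    assume asm: "0 < \<epsilon> \<and> \<epsilon> < \<epsilon>0 \<and> norm A \<le> K \<and> 0 < b \<and> b \<le> K"
    hence \<epsilon>: "0 < \<epsilon>" "\<epsilon> < \<epsilon>0" and A: "norm A \<le> K" and b: "0 < b" "b \<le> K" by auto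
    have \<epsilon>1: "\<epsilon> \<le> 1" using \<epsilon> unfolding \<epsilon>0_def by simp
    have \<epsilon>\<rho>: "(C + K) * \<epsilon> < \<rho>"
      using \<epsilon> C K unfolding \<epsilon>0_def by (simp add: field_simps)
    have LA: "L1m A \<le> C"
    proof -
      have "L1m A \<le> n * n * norm A" using L1m_le_norm[of A] unfolding n_def by simp
      also have "\<dots> \<le> n * n * K" using A n by (intro mult_left_mono) auto
      finally show ?thesis unfolding C_def .
    qed
    define \<tau> where "\<tau> = b / (n + 2) * \<epsilon>\<^sup>2"
    have \<tau>0: "\<tau> > 0" unfolding \<tau>_def using b \<epsilon> n by simp
    have \<tau>K: "\<tau> \<le> K * \<epsilon>\<^sup>2"
    proof -
      have "b \<le> b * (n + 2)" using b n by (simp add: mult_le_cancel_left1)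
      hence "b / (n + 2) \<le> b" using n by (simp add: divide_le_eq)
      hence "b / (n + 2) \<le> K" using b by linarith
      thus ?thesis unfolding \<tau>_def using \<epsilon> by (intro mult_right_mono) auto
    qed
    have \<tau>K1: "\<tau> \<le> K * \<epsilon>"
    proof -
      have "\<epsilon>\<^sup>2 \<le> \<epsilon>" using \<epsilon> \<epsilon>1 by (simp add: power2_eq_square mult_le_cancel_right1)
      hence "K * \<epsilon>\<^sup>2 \<le> K * \<epsilon>" using K by (intro mult_left_mono) auto
      thus ?thesis using \<tau>K by linarith
    qed
    define \<beta> where "\<beta> = measure lborel (ball (0::real^'n) \<epsilon>)"
    have \<beta>: "\<beta> > 0" unfolding \<beta>_def using \<epsilon> by simp
    define P where "P = transpose A ** M ** A"
    define q where "q = \<epsilon>\<^sup>2 / (2 * (n + 2)) * trace P"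
    have region: "(x + r *\<^sub>R (A *v y), s) \<in> S \<and> dist (x + r *\<^sub>R (A *v y), s) (x, t) < \<rho>1"
      if y: "norm y \<le> \<epsilon>" and r: "r \<in> {0..1}" and s: "\<bar>s - t\<bar> \<le> \<tau>" for y r s
    proof -
      have "norm (r *\<^sub>R (A *v y)) \<le> norm (A *v y)" using r by (simp add: mult_left_le_one_le)
      also have "\<dots> \<le> L1m A * norm y" by (rule norm_mv_le)
      also have "\<dots> \<le> C * \<epsilon>" using LA y C by (intro mult_mono) auto
      finally have h: "norm (r *\<^sub>R (A *v y)) \<le> C * \<epsilon>" .
      have "dist (x + r *\<^sub>R (A *v y), s) (x, t) \<le> dist (x + r *\<^sub>R (A *v y)) x + dist s t"
        by (rule dist_pair_le)
      also have "\<dots> \<le> C * \<epsilon> + K * \<epsilon>" using h s \<tau>K1 by (simp add: dist_norm dist_real_def)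
      also have "\<dots> < \<rho>" using \<epsilon>\<rho> by (simp add: algebra_simps)
      finally have d: "dist (x + r *\<^sub>R (A *v y), s) (x, t) < \<rho>" .
      hence "(x + r *\<^sub>R (A *v y), s) \<in> ball (x, t) \<rho>0" unfolding \<rho>_def by (simp add: dist_commute)
      with \<rho>0 d show ?thesis unfolding \<rho>_def by auto
    qed
    have intf1: "(\<lambda>y. phi (x + A *v y) s) integrable_on ball 0 \<epsilon>" if s: "\<bar>s - t\<bar> \<le> \<tau>" for s
    proof (rule cont_int_ball)
      have "continuous_on (cball 0 \<epsilon>) (\<lambda>y. (\<lambda>(z, s). phi z s) (x + A *v y, s))"
      proof (rule continuous_on_compose2[OF contphi])
        show "continuous_on (cball 0 \<epsilon>) (\<lambda>y. (x + A *v y, s))"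
          by (intro continuous_intros)
        show "(\<lambda>y. (x + A *v y, s)) ` cball 0 \<epsilon> \<subseteq> S"
        proof
          fix p assume "p \<in> (\<lambda>y. (x + A *v y, s)) ` cball 0 \<epsilon>"
          then obtain y where y: "norm y \<le> \<epsilon>" and p: "p = (x + A *v y, s)" by auto
          from region[OF y _ s, of 1] show "p \<in> S" unfolding p by simp
        qed
      qed
      thus "continuous_on (cball 0 \<epsilon>) (\<lambda>y. phi (x + A *v y) s)" by simp
    qed
    have inner: "\<bar>integral (ball 0 \<epsilon>) (\<lambda>y. phi (x + A *v y) s) / \<beta> - phi x s - q\<bar> \<le> \<omega> * C\<^sup>2 * \<epsilon>\<^sup>2 / 2"
      if s: "\<bar>s - t\<bar> \<le> \<tau>" for s
    proof -
      define f2 where "f2 = (\<lambda>y. phi x s + Dphi x s \<bullet> (A *v y) + ((M *v (A *v y)) \<bullet> (A *v y)) / 2)"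
      have tay: "\<bar>phi (x + A *v y) s - f2 y\<bar> \<le> \<omega> * C\<^sup>2 * \<epsilon>\<^sup>2 / 2" if y: "y \<in> ball 0 \<epsilon>" for y
      proof -
        have yn: "norm y \<le> \<epsilon>" using y by simp
        have "\<bar>phi (x + A *v y) s - phi x s - Dphi x s \<bullet> (A *v y) - ((M *v (A *v y)) \<bullet> (A *v y)) / 2\<bar>
              \<le> \<omega> * (norm (A *v y))\<^sup>2 / 2"
        proof (rule taylor2)
          fix r :: real assume r: "r \<in> {0..1}"
          from region[OF yn r s] have reg: "(x + r *\<^sub>R (A *v y), s) \<in> S" "dist (x + r *\<^sub>R (A *v y), s) (x, t) < \<rho>1" by auto
          from Cd[OF reg(1)] show "((\<lambda>y. phi y s) has_derivative (\<lambda>k. Dphi (x + r *\<^sub>R (A *v y)) s \<bullet> k)) (at (x + r *\<^sub>R (A *v y))) \<and>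
              ((\<lambda>y. Dphi y s) has_derivative (\<lambda>k. D2phi (x + r *\<^sub>R (A *v y)) s *v k)) (at (x + r *\<^sub>R (A *v y)))" by simp
          from \<rho>1'[OF reg] have "norm (D2phi (x + r *\<^sub>R (A *v y)) s - M) < \<omega> / (n * n)"
            by (simp add: dist_norm)
          hence "n * n * norm (D2phi (x + r *\<^sub>R (A *v y)) s - M) \<le> \<omega>"
            using n by (simp add: field_simps)
          moreover have "L1m (D2phi (x + r *\<^sub>R (A *v y)) s - M) \<le> n * n * norm (D2phi (x + r *\<^sub>R (A *v y)) s - M)"
            using L1m_le_norm[of "D2phi (x + r *\<^sub>R (A *v y)) s - M"] unfolding n_def by simp
          ultimately show "L1m (D2phi (x + r *\<^sub>R (A *v y)) s - M) \<le> \<omega>" by simp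
        qed
        also have "\<dots> \<le> \<omega> * C\<^sup>2 * \<epsilon>\<^sup>2 / 2"
        proof -
          have "norm (A *v y) \<le> C * \<epsilon>"
          proof -
            have "L1m A * norm y \<le> C * \<epsilon>" using LA yn C by (intro mult_mono) auto
            thus ?thesis using norm_mv_le[of A y] by linarith
          qed
          hence "(norm (A *v y))\<^sup>2 \<le> (C * \<epsilon>)\<^sup>2" by (simp add: power_mono)
          thus ?thesis using \<omega> by (simp add: power_mult_distrib mult.assoc)
        qed
        finally show ?thesis unfolding f2_def by (simp add: algebra_simps)
      qed
      have lin: "((\<lambda>y. Dphi x s \<bullet> (A *v y)) has_integral 0) (ball 0 \<epsilon>)"
        using lin_form_int[of "transpose A *v Dphi x s" \<epsilon>] by (simp add: inner_mv_transpose)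
      have quad: "((\<lambda>y. ((M *v (A *v y)) \<bullet> (A *v y)) / 2) has_integral (\<epsilon>\<^sup>2 / (n + 2) * \<beta> * trace P) / 2) (ball 0 \<epsilon>)"
        using has_integral_divide[OF quad_form_int[OF \<epsilon>(1), of P], of 2]
        unfolding P_def \<beta>_def n_def by (simp add: quad_transpose)
      have cst: "((\<lambda>y::real^'n. phi x s) has_integral \<beta> * phi x s) (ball 0 \<epsilon>)"
        using has_integral_mult_left[OF has_integral_one_ball[of "0::real^'n" \<epsilon>], of "phi x s"]
        unfolding \<beta>_def by (simp add: mult.commute)
      have f2int: "(f2 has_integral \<beta> * (phi x s + q)) (ball 0 \<epsilon>)"
      proof -
        from has_integral_add[OF has_integral_add[OF cst lin] quad]
        have "(f2 has_integral \<beta> * phi x s + 0 + (\<epsilon>\<^sup>2 / (n + 2) * \<beta> * trace P) / 2) (ball 0 \<epsilon>)"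
          unfolding f2_def by simp
        moreover have "\<beta> * phi x s + 0 + (\<epsilon>\<^sup>2 / (n + 2) * \<beta> * trace P) / 2 = \<beta> * (phi x s + q)"
          unfolding q_def by (simp add: field_simps)
        ultimately show ?thesis by simp
      qed
      have "\<bar>integral (ball 0 \<epsilon>) (\<lambda>y. phi (x + A *v y) s) - \<beta> * (phi x s + q)\<bar>
            = norm (integral (ball 0 \<epsilon>) (\<lambda>y. phi (x + A *v y) s - f2 y))"
        using integral_diff[OF intf1[OF s] has_integral_integrable[OF f2int]] integral_unique[OF f2int]
        by simp
      also have "\<dots> \<le> integral (ball 0 \<epsilon>) (\<lambda>y::real^'n. \<omega> * C\<^sup>2 * \<epsilon>\<^sup>2 / 2)"
      proof (rule integral_norm_bound_integral)
        show "(\<lambda>y. phi (x + A *v y) s - f2 y) integrable_on ball 0 \<epsilon>"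
          by (intro integrable_diff intf1[OF s] has_integral_integrable[OF f2int])
        show "(\<lambda>y::real^'n. \<omega> * C\<^sup>2 * \<epsilon>\<^sup>2 / 2) integrable_on ball 0 \<epsilon>"
          by (intro integrable_on_const) simp
        fix y :: "real^'n" assume "y \<in> ball 0 \<epsilon>"
        thus "norm (phi (x + A *v y) s - f2 y) \<le> \<omega> * C\<^sup>2 * \<epsilon>\<^sup>2 / 2" using tay by simp
      qed
      also have "\<dots> = (\<omega> * C\<^sup>2 * \<epsilon>\<^sup>2 / 2) * \<beta>"
      proof (rule integral_unique)
        show "((\<lambda>y::real^'n. \<omega> * C\<^sup>2 * \<epsilon>\<^sup>2 / 2) has_integral (\<omega> * C\<^sup>2 * \<epsilon>\<^sup>2 / 2) * \<beta>) (ball 0 \<epsilon>)"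
          using has_integral_mult_right[OF has_integral_one_ball[of "0::real^'n" \<epsilon>], of "\<omega> * C\<^sup>2 * \<epsilon>\<^sup>2 / 2"]
          unfolding \<beta>_def by (simp only: mult_1_right)
      qed
      finally have "\<bar>integral (ball 0 \<epsilon>) (\<lambda>y. phi (x + A *v y) s) - \<beta> * (phi x s + q)\<bar> \<le> (\<omega> * C\<^sup>2 * \<epsilon>\<^sup>2 / 2) * \<beta>" .
      hence "\<bar>integral (ball 0 \<epsilon>) (\<lambda>y. phi (x + A *v y) s) - \<beta> * (phi x s + q)\<bar> / \<beta> \<le> (\<omega> * C\<^sup>2 * \<epsilon>\<^sup>2 / 2) * \<beta> / \<beta>"
        using \<beta> by (intro divide_right_mono) auto
      hence "\<bar>integral (ball 0 \<epsilon>) (\<lambda>y. phi (x + A *v y) s) - \<beta> * (phi x s + q)\<bar> / \<beta> \<le> \<omega> * C\<^sup>2 * \<epsilon>\<^sup>2 / 2"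
        using \<beta> by simp
      moreover have "(integral (ball 0 \<epsilon>) (\<lambda>y. phi (x + A *v y) s) - \<beta> * (phi x s + q)) / \<beta>
         = integral (ball 0 \<epsilon>) (\<lambda>y. phi (x + A *v y) s) / \<beta> - phi x s - q"
        using \<beta> by (simp add: diff_divide_distrib)
      hence "\<bar>integral (ball 0 \<epsilon>) (\<lambda>y. phi (x + A *v y) s) - \<beta> * (phi x s + q)\<bar> / \<beta>
         = \<bar>integral (ball 0 \<epsilon>) (\<lambda>y. phi (x + A *v y) s) / \<beta> - phi x s - q\<bar>"
        using \<beta> by (metis abs_divide abs_of_pos)
      ultimately show ?thesis by simp
    qed
    have contI: "continuous_on {t - \<tau>..t} (\<lambda>s. integral (ball 0 \<epsilon>) (\<lambda>y. phi (x + A *v y) s))"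
    proof (rule param_int_cont)
      have "continuous_on (cball 0 \<epsilon> \<times> {t - \<tau>..t}) (\<lambda>p. (\<lambda>(z, s). phi z s) (x + A *v fst p, snd p))"
      proof (rule continuous_on_compose2[OF contphi])
        show "continuous_on (cball 0 \<epsilon> \<times> {t - \<tau>..t}) (\<lambda>p. (x + A *v fst p, snd p))"
          by (intro continuous_intros cont_mv_fst)
        show "(\<lambda>p. (x + A *v fst p, snd p)) ` (cball 0 \<epsilon> \<times> {t - \<tau>..t}) \<subseteq> S"
        proof
          fix p assume "p \<in> (\<lambda>p. (x + A *v fst p, snd p)) ` (cball 0 \<epsilon> \<times> {t - \<tau>..t})"
          then obtain y s where y: "norm y \<le> \<epsilon>" and s: "s \<in> {t - \<tau>..t}" and p: "p = (x + A *v y, s)" by auto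
          have "\<bar>s - t\<bar> \<le> \<tau>" using s by auto
          from region[OF y _ this, of 1] show "p \<in> S" unfolding p by simp
        qed
      qed
      thus "continuous_on (cball 0 \<epsilon> \<times> {t - \<tau>..t}) (\<lambda>(y, s). phi (x + A *v y) s)"
        by (simp add: case_prod_beta')
    qed
    have timeb: "\<bar>phi x s - phi x t - phit x t * (s - t)\<bar> \<le> \<delta>' * \<tau>" if s: "\<bar>s - t\<bar> \<le> \<tau>" for s
    proof -
      have "\<tau> < \<rho>2"
      proof -
        have "\<tau> \<le> K * \<epsilon>" by (rule \<tau>K1)
        also have "\<dots> \<le> (C + K) * \<epsilon>" using C \<epsilon> by (intro mult_right_mono) auto
        also have "\<dots> < \<rho>" by (rule \<epsilon>\<rho>)
        also have "\<rho> \<le> \<rho>2" unfolding \<rho>_def by simp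
        finally show ?thesis .
      qed
      hence "norm (s - t) < \<rho>2" using s by simp
      from \<rho>2'[OF this] have "\<bar>phi x s - phi x t - phit x t * (s - t)\<bar> \<le> \<delta>' * \<bar>s - t\<bar>" by simp
      also have "\<dots> \<le> \<delta>' * \<tau>" using s \<delta>' by (intro mult_left_mono) auto
      finally show ?thesis .
    qed
    define g where "g = (\<lambda>s. (1 / \<beta>) * integral (ball 0 \<epsilon>) (\<lambda>y. phi (x + A *v y) s) - (phi x t + q + phit x t * (s - t)))"
    have contg: "continuous_on {t - \<tau>..t} g"
      unfolding g_def by (intro continuous_intros contI)
    have gb: "norm (g s) \<le> \<omega> * C\<^sup>2 * \<epsilon>\<^sup>2 / 2 + \<delta>' * \<tau>" if s: "s \<in> {t - \<tau>..t}" for s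
    proof -
      have s': "\<bar>s - t\<bar> \<le> \<tau>" using s by auto
      have "g s = (integral (ball 0 \<epsilon>) (\<lambda>y. phi (x + A *v y) s) / \<beta> - phi x s - q) + (phi x s - phi x t - phit x t * (s - t))"
        unfolding g_def by simp
      hence "norm (g s) \<le> \<bar>integral (ball 0 \<epsilon>) (\<lambda>y. phi (x + A *v y) s) / \<beta> - phi x s - q\<bar> + \<bar>phi x s - phi x t - phit x t * (s - t)\<bar>"
        by (simp only: real_norm_def abs_triangle_ineq)
      thus ?thesis using inner[OF s'] timeb[OF s'] by linarith
    qed
    have gint: "norm (integral {t - \<tau>..t} g) \<le> (\<omega> * C\<^sup>2 * \<epsilon>\<^sup>2 / 2 + \<delta>' * \<tau>) * (t - (t - \<tau>))"
      using \<tau>0 by (intro integral_bound contg gb) auto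
    have polyint: "((\<lambda>s. phi x t + q + phit x t * (s - t)) has_integral \<tau> * (phi x t + q) - phit x t * \<tau>\<^sup>2 / 2) {t - \<tau>..t}"
    proof -
      define F where "F = (\<lambda>s. (phi x t + q) * s + phit x t * (s - t)\<^sup>2 / 2)"
      have "((\<lambda>s. phi x t + q + phit x t * (s - t)) has_integral F t - F (t - \<tau>)) {t - \<tau>..t}"
      proof (rule fundamental_theorem_of_calculus)
        show "t - \<tau> \<le> t" using \<tau>0 by simp
        fix s assume "s \<in> {t - \<tau>..t}"
        show "(F has_vector_derivative phi x t + q + phit x t * (s - t)) (at s within {t - \<tau>..t})"
          unfolding F_def by (auto intro!: derivative_eq_intros simp: power2_eq_square field_simps)
      qed
      moreover have "F t - F (t - \<tau>) = \<tau> * (phi x t + q) - phit x t * \<tau>\<^sup>2 / 2"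
        unfolding F_def by (simp add: algebra_simps)
      ultimately show ?thesis by simp
    qed
    have hint: "integral {t - \<tau>..t} (\<lambda>s. (1 / \<beta>) * integral (ball 0 \<epsilon>) (\<lambda>y. phi (x + A *v y) s))
        = integral {t - \<tau>..t} g + (\<tau> * (phi x t + q) - phit x t * \<tau>\<^sup>2 / 2)"
    proof -
      have "(\<lambda>s. (1 / \<beta>) * integral (ball 0 \<epsilon>) (\<lambda>y. phi (x + A *v y) s)) = (\<lambda>s. g s + (phi x t + q + phit x t * (s - t)))"
        unfolding g_def by (rule ext) simp
      moreover have "integral {t - \<tau>..t} (\<lambda>s. g s + (phi x t + q + phit x t * (s - t)))
          = integral {t - \<tau>..t} g + integral {t - \<tau>..t} (\<lambda>s. phi x t + q + phit x t * (s - t))"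
        by (rule integral_add) (auto intro: integrable_continuous_real contg has_integral_integrable[OF polyint])
      ultimately show ?thesis using integral_unique[OF polyint] by simp
    qed
    define G where "G = (1 / \<tau>) * integral {t - \<tau>..t} (\<lambda>s. (1 / \<beta>) * integral (ball 0 \<epsilon>) (\<lambda>y. phi (x + A *v y) s))"
    have Geq: "G - phi x t - (q - phit x t * \<tau> / 2) = (1 / \<tau>) * integral {t - \<tau>..t} g"
      unfolding G_def hint using \<tau>0 by (simp add: field_simps power2_eq_square)
    have "\<bar>G - phi x t - (q - phit x t * \<tau> / 2)\<bar> \<le> \<omega> * C\<^sup>2 * \<epsilon>\<^sup>2 / 2 + \<delta>' * \<tau>"
    proof -
      have "\<bar>G - phi x t - (q - phit x t * \<tau> / 2)\<bar> = norm (integral {t - \<tau>..t} g) / \<tau>"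
        unfolding Geq using \<tau>0 by (simp add: abs_mult)
      also have "\<dots> \<le> (\<omega> * C\<^sup>2 * \<epsilon>\<^sup>2 / 2 + \<delta>' * \<tau>) * \<tau> / \<tau>"
        using gint \<tau>0 by (intro divide_right_mono) auto
      also have "\<dots> = \<omega> * C\<^sup>2 * \<epsilon>\<^sup>2 / 2 + \<delta>' * \<tau>" using \<tau>0 by simp
      finally show ?thesis .
    qed
    also have "\<omega> * C\<^sup>2 * \<epsilon>\<^sup>2 / 2 = \<delta> * \<epsilon>\<^sup>2 / 2" unfolding \<omega>_def using C by simp
    also have "\<delta>' * \<tau> \<le> \<delta> * \<epsilon>\<^sup>2 / 2"
    proof -
      have "\<delta>' * \<tau> \<le> \<delta>' * (K * \<epsilon>\<^sup>2)" using \<tau>K \<delta>' by (intro mult_left_mono) auto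
      also have "\<dots> = \<delta> * \<epsilon>\<^sup>2 / 2" unfolding \<delta>'_def using K by simp
      finally show ?thesis .
    qed
    finally have fin: "\<bar>G - phi x t - (q - phit x t * \<tau> / 2)\<bar> \<le> \<delta> * \<epsilon>\<^sup>2" by simp
    have "q - phit x t * \<tau> / 2 = \<epsilon>\<^sup>2 / (2 * (n + 2)) * (trace P - b * phit x t)"
    proof -
      have "n + 2 > 0" using n by simp
      define k where "k = \<epsilon>\<^sup>2 / (2 * (n + 2))"
      have t2: "\<tau> = 2 * k * b" unfolding \<tau>_def k_def using \<open>n + 2 > 0\<close> by (simp add: field_simps)
      have qk: "q = k * trace P" unfolding q_def k_def ..
      have "q - phit x t * \<tau> / 2 = k * (trace P - b * phit x t)" unfolding qk t2 by (simp add: algebra_simps)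
      thus ?thesis unfolding k_def .
    qed
    with fin show "\<bar>(1 / (b / (real CARD('n) + 2) * \<epsilon>\<^sup>2)) * integral {t - b / (real CARD('n) + 2) * \<epsilon>\<^sup>2 .. t}
          (\<lambda>s. (1 / measure lborel (ball (0::real^'n) \<epsilon>)) * integral (ball 0 \<epsilon>) (\<lambda>y. phi (x + A *v y) s))
       - phi x t - \<epsilon>\<^sup>2 / (2 * (real CARD('n) + 2)) * (trace (transpose A ** D2phi x t ** A) - b * phit x t)\<bar>
       \<le> \<delta> * \<epsilon>\<^sup>2"
      unfolding G_def \<tau>_def \<beta>_def P_def M_def n_def by simp
  qed
  thus ?thesis using \<epsilon>0 by blast
qed


lemma supinf_affine:
  fixes G h :: "'p \<Rightarrow> real" and AA :: "'p set set"
  assumes ne: "AA \<noteq> {}" and ne2: "\<And>\<A>. \<A> \<in> AA \<Longrightarrow> \<A> \<noteq> {}"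
    and hb: "\<And>\<A> p. \<A> \<in> AA \<Longrightarrow> p \<in> \<A> \<Longrightarrow> \<bar>h p\<bar> \<le> B"
    and k: "k > 0"
    and close: "\<And>\<A> p. \<A> \<in> AA \<Longrightarrow> p \<in> \<A> \<Longrightarrow> \<bar>G p - (a + k * h p)\<bar> \<le> \<eta>"
  shows "\<bar>(SUP \<A>\<in>AA. INF p\<in>\<A>. G p) - (a + k * (SUP \<A>\<in>AA. INF p\<in>\<A>. h p))\<bar> \<le> \<eta>"
proof -
  have bh: "bdd_below (h ` \<A>)" if "\<A> \<in> AA" for \<A>
  proof (intro bdd_belowI[of _ "-B"])
    fix v assume "v \<in> h ` \<A>"
    then obtain q where q: "q \<in> \<A>" "v = h q" by auto
    from hb[OF that q(1)] q(2) show "- B \<le> v" by linarith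
  qed
  have bG: "bdd_below (G ` \<A>)" if "\<A> \<in> AA" for \<A>
  proof (intro bdd_belowI[of _ "a - k * B - \<eta>"])
    fix v assume "v \<in> G ` \<A>"
    then obtain p where p: "p \<in> \<A>" "v = G p" by auto
    have "- B \<le> h p" using hb[OF that p(1)] by (simp add: abs_le_iff)
    hence "k * (- B) \<le> k * h p" using k by (intro mult_left_mono) auto
    thus "a - k * B - \<eta> \<le> v" using close[OF that p(1)] p(2) by (simp add: abs_le_iff)
  qed
  have infh: "\<bar>(INF p\<in>\<A>. h p)\<bar> \<le> B" if A: "\<A> \<in> AA" for \<A>
  proof -
    obtain p where p: "p \<in> \<A>" using ne2[OF A] by auto
    have "(INF p\<in>\<A>. h p) \<le> h p" by (rule cINF_lower[OF bh[OF A] p])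
    moreover have "- B \<le> (INF p\<in>\<A>. h p)"
    proof (rule cINF_greatest[OF ne2[OF A]])
      fix q assume "q \<in> \<A>"
      from hb[OF A this] show "- B \<le> h q" by linarith
    qed
    ultimately show ?thesis using hb[OF A p] by (auto simp: abs_le_iff)
  qed
  have inf1: "a + k * (INF p\<in>\<A>. h p) - \<eta> \<le> (INF p\<in>\<A>. G p)" if A: "\<A> \<in> AA" for \<A>
  proof (rule cINF_greatest[OF ne2[OF A]])
    fix p assume p: "p \<in> \<A>"
    have "(INF p\<in>\<A>. h p) \<le> h p" by (rule cINF_lower[OF bh[OF A] p])
    hence "k * (INF p\<in>\<A>. h p) \<le> k * h p" using k by (intro mult_left_mono) auto
    thus "a + k * (INF p\<in>\<A>. h p) - \<eta> \<le> G p" using close[OF A p] by (simp add: abs_le_iff)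
  qed
  have inf2: "(INF p\<in>\<A>. G p) \<le> a + k * (INF p\<in>\<A>. h p) + \<eta>" if A: "\<A> \<in> AA" for \<A>
  proof -
    have "((INF p\<in>\<A>. G p) - a - \<eta>) / k \<le> (INF p\<in>\<A>. h p)"
    proof (rule cINF_greatest[OF ne2[OF A]])
      fix p assume p: "p \<in> \<A>"
      have "(INF p\<in>\<A>. G p) \<le> G p" by (rule cINF_lower[OF bG[OF A] p])
      hence "(INF p\<in>\<A>. G p) - a - \<eta> \<le> k * h p" using close[OF A p] by (simp add: abs_le_iff)
      thus "((INF p\<in>\<A>. G p) - a - \<eta>) / k \<le> h p" using k by (simp add: divide_le_eq mult.commute)
    qed
    thus ?thesis using k by (simp add: divide_le_eq mult.commute)
  qed
  have bsh: "bdd_above ((\<lambda>\<A>. INF p\<in>\<A>. h p) ` AA)"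
    using infh by (intro bdd_aboveI[of _ B]) (auto simp: abs_le_iff)
  have bsG: "bdd_above ((\<lambda>\<A>. INF p\<in>\<A>. G p) ` AA)"
  proof (intro bdd_aboveI[of _ "a + k * B + \<eta>"])
    fix v assume "v \<in> (\<lambda>\<A>. INF p\<in>\<A>. G p) ` AA"
    then obtain \<A> where A: "\<A> \<in> AA" "v = (INF p\<in>\<A>. G p)" by auto
    have "(INF p\<in>\<A>. h p) \<le> B" using infh[OF A(1)] by (simp add: abs_le_iff)
    hence "k * (INF p\<in>\<A>. h p) \<le> k * B" using k by (intro mult_left_mono) auto
    thus "v \<le> a + k * B + \<eta>" using inf2[OF A(1)] A(2) by simp
  qed
  have sup1: "(SUP \<A>\<in>AA. INF p\<in>\<A>. G p) \<le> a + k * (SUP \<A>\<in>AA. INF p\<in>\<A>. h p) + \<eta>"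
  proof (rule cSUP_least[OF ne])
    fix \<A> assume A: "\<A> \<in> AA"
    have "(INF p\<in>\<A>. h p) \<le> (SUP \<A>\<in>AA. INF p\<in>\<A>. h p)" by (rule cSUP_upper[OF A bsh])
    hence "k * (INF p\<in>\<A>. h p) \<le> k * (SUP \<A>\<in>AA. INF p\<in>\<A>. h p)" using k by (intro mult_left_mono) auto
    thus "(INF p\<in>\<A>. G p) \<le> a + k * (SUP \<A>\<in>AA. INF p\<in>\<A>. h p) + \<eta>" using inf2[OF A] by simp
  qed
  have sup2: "a + k * (SUP \<A>\<in>AA. INF p\<in>\<A>. h p) - \<eta> \<le> (SUP \<A>\<in>AA. INF p\<in>\<A>. G p)"
  proof -
    have "(SUP \<A>\<in>AA. INF p\<in>\<A>. h p) \<le> ((SUP \<A>\<in>AA. INF p\<in>\<A>. G p) - a + \<eta>) / k"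
    proof (rule cSUP_least[OF ne])
      fix \<A> assume A: "\<A> \<in> AA"
      have "(INF p\<in>\<A>. G p) \<le> (SUP \<A>\<in>AA. INF p\<in>\<A>. G p)" by (rule cSUP_upper[OF A bsG])
      hence "k * (INF p\<in>\<A>. h p) \<le> (SUP \<A>\<in>AA. INF p\<in>\<A>. G p) - a + \<eta>" using inf1[OF A] by simp
      thus "(INF p\<in>\<A>. h p) \<le> ((SUP \<A>\<in>AA. INF p\<in>\<A>. G p) - a + \<eta>) / k" using k by (simp add: le_divide_eq mult.commute)
    qed
    thus ?thesis using k by (simp add: le_divide_eq mult.commute)
  qed
  show ?thesis using sup1 sup2 by (simp add: abs_le_iff)
qed

lemma lim_max_iff:
  fixes y :: "real \<Rightarrow> real"
  assumes lim: "((\<lambda>\<epsilon>. y \<epsilon> / \<epsilon>\<^sup>2) \<longlongrightarrow> L) (at_right 0)"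
  shows "((\<lambda>\<epsilon>. max 0 (y \<epsilon>) / \<epsilon>\<^sup>2) \<longlongrightarrow> 0) (at_right 0) \<longleftrightarrow> L \<le> 0"
proof -
  have ev: "eventually (\<lambda>\<epsilon>. max 0 (y \<epsilon> / \<epsilon>\<^sup>2) = max 0 (y \<epsilon>) / \<epsilon>\<^sup>2) (at_right (0::real))"
  proof -
    have "eventually (\<lambda>\<epsilon>::real. \<epsilon> > 0) (at_right 0)" by (simp add: eventually_at_right_less)
    thus ?thesis
    proof (rule eventually_mono)
      fix \<epsilon> :: real assume "\<epsilon> > 0"
      hence e2: "\<epsilon>\<^sup>2 > 0" by simp
      show "max 0 (y \<epsilon> / \<epsilon>\<^sup>2) = max 0 (y \<epsilon>) / \<epsilon>\<^sup>2"
      proof (cases "y \<epsilon> \<ge> 0")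
        case True
        hence "y \<epsilon> / \<epsilon>\<^sup>2 \<ge> 0" using e2 by simp
        thus ?thesis using True by simp
      next
        case False
        hence "y \<epsilon> / \<epsilon>\<^sup>2 < 0" using e2 by (simp add: divide_neg_pos)
        thus ?thesis using False by simp
      qed
    qed
  qed
  have "((\<lambda>\<epsilon>. max 0 (y \<epsilon> / \<epsilon>\<^sup>2)) \<longlongrightarrow> max 0 L) (at_right 0)"
    by (intro tendsto_max tendsto_const lim)
  hence lim2: "((\<lambda>\<epsilon>. max 0 (y \<epsilon>) / \<epsilon>\<^sup>2) \<longlongrightarrow> max 0 L) (at_right 0)"
    using ev by (rule Lim_transform_eventually)
  show ?thesis
  proof
    assume "((\<lambda>\<epsilon>. max 0 (y \<epsilon>) / \<epsilon>\<^sup>2) \<longlongrightarrow> 0) (at_right 0)"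
    from tendsto_unique[OF trivial_limit_at_right_real lim2 this] show "L \<le> 0" by simp
  next
    assume "L \<le> 0"
    hence m: "max 0 L = 0" by simp
    show "((\<lambda>\<epsilon>. max 0 (y \<epsilon>) / \<epsilon>\<^sup>2) \<longlongrightarrow> 0) (at_right 0)" using lim2 unfolding m .
  qed
qed


lemma h_cont: "continuous_on UNIV (\<lambda>p::(real^'n^'n) \<times> real. trace (transpose (fst p) ** M ** fst p) - snd p * z)"
  unfolding trace_def matrix_matrix_mult_def transpose_def
  by (intro continuous_intros)

lemma mean_lim:
  fixes AA :: "real^'n \<Rightarrow> real \<Rightarrow> ((real^'n^'n) \<times> real) set set"
    and phi :: "real^'n \<Rightarrow> real \<Rightarrow> real" and phit :: "real^'n \<Rightarrow> real \<Rightarrow> real"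
    and Dphi :: "real^'n \<Rightarrow> real \<Rightarrow> real^'n" and D2phi :: "real^'n \<Rightarrow> real \<Rightarrow> real^'n^'n"
  assumes \<Omega>: "open \<Omega>" and x: "x \<in> \<Omega>" and t: "t \<in> {t1<..<t2}"
    and ne: "AA x t \<noteq> {}" and ne2: "\<And>\<A>. \<A> \<in> AA x t \<Longrightarrow> \<A> \<noteq> {}"
    and pos: "\<And>\<A> A b. \<A> \<in> AA x t \<Longrightarrow> (A, b) \<in> \<A> \<Longrightarrow> 0 < b"
    and bd: "bounded (\<Union> (AA x t))"
    and C21: "C21_on (\<Omega> \<times> {t1<..<t2}) phi phit Dphi D2phi"
  shows "((\<lambda>\<epsilon>. (- phi x t + mean_op AA \<epsilon> phi x t) / \<epsilon>\<^sup>2) \<longlongrightarrow>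
           F_op AA x t (phit x t) (D2phi x t) / (2 * (real CARD('n) + 2))) (at_right 0)"
proof -
  define c where "c = 2 * (real CARD('n) + 2)"
  have c: "c > 0" unfolding c_def by simp
  define h where "h = (\<lambda>p::(real^'n^'n) \<times> real. trace (transpose (fst p) ** D2phi x t ** fst p) - snd p * phit x t)"
  obtain K0 where K0: "\<And>p. p \<in> \<Union> (AA x t) \<Longrightarrow> norm p \<le> K0"
    using bd unfolding bounded_iff by blast
  define K where "K = max K0 1"
  have K: "K > 0" unfolding K_def by simp
  have pK: "norm (fst p) \<le> K \<and> 0 < snd p \<and> snd p \<le> K" if "\<A> \<in> AA x t" "p \<in> \<A>" for \<A> p
  proof -
    obtain A b where p: "p = (A, b)" by (cases p)
    have "norm p \<le> K0" using K0[of p] that by blast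
    hence n: "norm p \<le> K" unfolding K_def by simp
    have "norm A \<le> K" using norm_fst_le[of A b] n p by simp
    moreover have "\<bar>b\<bar> \<le> K" using norm_snd_le[of b A] n p by simp
    moreover have "0 < b" using pos that p by blast
    ultimately show ?thesis using p by simp
  qed
  obtain B where B: "\<And>p. p \<in> \<Union> (AA x t) \<Longrightarrow> \<bar>h p\<bar> \<le> B"
  proof -
    have "compact (h ` closure (\<Union> (AA x t)))"
      unfolding h_def
      by (intro compact_continuous_image continuous_on_subset[OF h_cont])
         (auto simp: bd compact_closure)
    hence "bounded (h ` closure (\<Union> (AA x t)))" by (rule compact_imp_bounded)
    then obtain B where "\<And>v. v \<in> h ` closure (\<Union> (AA x t)) \<Longrightarrow> norm v \<le> B"
      unfolding bounded_iff by blast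
    thus ?thesis using that closure_subset by (metis image_eqI real_norm_def subsetD)
  qed
  define F0 where "F0 = F_op AA x t (phit x t) (D2phi x t)"
  have F0: "F0 = (SUP \<A>\<in>AA x t. INF p\<in>\<A>. h p)"
    unfolding F0_def F_op_def h_def ..
  show ?thesis
    unfolding tendsto_iff F0_def[symmetric] c_def[symmetric]
  proof (intro allI impI)
    fix e :: real assume e: "e > 0"
    define \<delta> where "\<delta> = e / 2"
    have \<delta>: "\<delta> > 0" unfolding \<delta>_def using e by simp
    from expansion[OF \<Omega> x t C21 K \<delta>] obtain \<epsilon>0 where \<epsilon>0: "\<epsilon>0 > 0" and
      ex: "\<And>\<epsilon> (A::real^'n^'n) b. 0 < \<epsilon> \<Longrightarrow> \<epsilon> < \<epsilon>0 \<Longrightarrow> norm A \<le> K \<Longrightarrow> 0 < b \<Longrightarrow> b \<le> K \<Longrightarrow>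
     \<bar>(1 / (b / (real CARD('n) + 2) * \<epsilon>\<^sup>2)) * integral {t - b / (real CARD('n) + 2) * \<epsilon>\<^sup>2 .. t}
          (\<lambda>s. (1 / measure lborel (ball (0::real^'n) \<epsilon>)) * integral (ball 0 \<epsilon>) (\<lambda>y. phi (x + A *v y) s))
       - phi x t - \<epsilon>\<^sup>2 / (2 * (real CARD('n) + 2)) * (trace (transpose A ** D2phi x t ** A) - b * phit x t)\<bar>
       \<le> \<delta> * \<epsilon>\<^sup>2"
      by blast
    show "eventually (\<lambda>\<epsilon>. dist ((- phi x t + mean_op AA \<epsilon> phi x t) / \<epsilon>\<^sup>2) (F0 / c) < e) (at_right 0)"
      unfolding eventually_at_right[OF zero_less_one]
    proof (intro exI[of _ "min \<epsilon>0 1"] conjI allI impI)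
      show "0 < min \<epsilon>0 1" using \<epsilon>0 by simp
      fix \<epsilon> :: real assume \<epsilon>: "0 < \<epsilon>" "\<epsilon> < min \<epsilon>0 1"
      define G where "G = (\<lambda>p::(real^'n^'n) \<times> real. (1 / (snd p / (real CARD('n) + 2) * \<epsilon>\<^sup>2)) * integral {t - snd p / (real CARD('n) + 2) * \<epsilon>\<^sup>2 .. t}
          (\<lambda>s. (1 / measure lborel (ball (0::real^'n) \<epsilon>)) * integral (ball 0 \<epsilon>) (\<lambda>y. phi (x + fst p *v y) s)))"
      have M: "mean_op AA \<epsilon> phi x t = (SUP \<A>\<in>AA x t. INF p\<in>\<A>. G p)"
        unfolding mean_op_def G_def Let_def ..
      have close: "\<bar>G p - (phi x t + \<epsilon>\<^sup>2 / c * h p)\<bar> \<le> \<delta> * \<epsilon>\<^sup>2" if "\<A> \<in> AA x t" "p \<in> \<A>" for \<A> p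
      proof -
        from pK[OF that] have "norm (fst p) \<le> K" "0 < snd p" "snd p \<le> K" by auto
        from ex[OF \<epsilon>(1) _ this] \<epsilon> show ?thesis unfolding G_def h_def c_def by (simp add: algebra_simps)
      qed
      have "\<bar>(SUP \<A>\<in>AA x t. INF p\<in>\<A>. G p) - (phi x t + \<epsilon>\<^sup>2 / c * (SUP \<A>\<in>AA x t. INF p\<in>\<A>. h p))\<bar> \<le> \<delta> * \<epsilon>\<^sup>2"
        by (rule supinf_affine[OF ne ne2 B _ close]) (use c \<epsilon> in auto)
      hence X: "\<bar>mean_op AA \<epsilon> phi x t - (phi x t + \<epsilon>\<^sup>2 / c * F0)\<bar> \<le> \<delta> * \<epsilon>\<^sup>2"
        unfolding M F0 .
      have e2: "\<epsilon>\<^sup>2 > 0" using \<epsilon> by simp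
      have "(- phi x t + mean_op AA \<epsilon> phi x t) / \<epsilon>\<^sup>2 - F0 / c = (mean_op AA \<epsilon> phi x t - (phi x t + \<epsilon>\<^sup>2 / c * F0)) / \<epsilon>\<^sup>2"
        using e2 c by (simp add: field_simps)
      hence "dist ((- phi x t + mean_op AA \<epsilon> phi x t) / \<epsilon>\<^sup>2) (F0 / c) = \<bar>mean_op AA \<epsilon> phi x t - (phi x t + \<epsilon>\<^sup>2 / c * F0)\<bar> / \<epsilon>\<^sup>2"
        using e2 by (simp add: dist_real_def abs_divide)
      also have "\<dots> \<le> \<delta> * \<epsilon>\<^sup>2 / \<epsilon>\<^sup>2" using X e2 by (intro divide_right_mono) auto
      also have "\<dots> = \<delta>" using e2 by simp
      also have "\<dots> < e" unfolding \<delta>_def using e by simp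
      finally show "dist ((- phi x t + mean_op AA \<epsilon> phi x t) / \<epsilon>\<^sup>2) (F0 / c) < e" .
    qed
  qed
qed


theorem theorem2p9:
  fixes \<Omega> :: "(real^'n) set" and t1 t2 :: real
    and AA :: "real^'n \<Rightarrow> real \<Rightarrow> ((real^'n^'n) \<times> real) set set"
    and u :: "real^'n \<Rightarrow> real \<Rightarrow> real"
  assumes "open \<Omega>" and "t1 < t2"
    and "\<And>x t. x \<in> \<Omega> \<Longrightarrow> t \<in> {t1<..<t2} \<Longrightarrow> AA x t \<noteq> {}"
    and "\<And>x t \<A>. x \<in> \<Omega> \<Longrightarrow> t \<in> {t1<..<t2} \<Longrightarrow> \<A> \<in> AA x t \<Longrightarrow> \<A> \<noteq> {}"
    and "\<And>x t \<A> A b. x \<in> \<Omega> \<Longrightarrow> t \<in> {t1<..<t2} \<Longrightarrow> \<A> \<in> AA x t \<Longrightarrow> (A, b) \<in> \<A>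
           \<Longrightarrow> psd_matrix A \<and> 0 < b"
    and "\<And>x t. x \<in> \<Omega> \<Longrightarrow> t \<in> {t1<..<t2} \<Longrightarrow> bounded (\<Union> (AA x t))"
    and "continuous_on (\<Omega> \<times> {t1<..<t2}) (\<lambda>(x,t). u x t)"
  shows "viscosity_solution \<Omega> t1 t2 (F_op AA) u \<longleftrightarrow> asymp_viscosity \<Omega> t1 t2 AA u"
proof -
  have lims: "((\<lambda>\<epsilon>. (- phi x t + mean_op AA \<epsilon> phi x t) / \<epsilon>\<^sup>2) \<longlongrightarrow>
           F_op AA x t (phit x t) (D2phi x t) / (2 * (real CARD('n) + 2))) (at_right 0)"
    if x: "x \<in> \<Omega>" and t: "t \<in> {t1<..<t2}" and C: "C21_on (\<Omega> \<times> {t1<..<t2}) phi phit Dphi D2phi"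
    for x t phi phit Dphi D2phi
  proof -
    have pos: "\<And>\<A> A b. \<A> \<in> AA x t \<Longrightarrow> (A, b) \<in> \<A> \<Longrightarrow> 0 < b"
      using assms(5)[OF x t] by blast
    show ?thesis by (rule mean_lim[where AA=AA and x=x and t=t, OF assms(1) x t assms(3)[OF x t] assms(4)[OF x t] pos assms(6)[OF x t] C])
  qed
  have c: "2 * (real CARD('n) + 2) > 0" by simp
  have key1: "((\<lambda>\<epsilon>. max 0 (- phi x t + mean_op AA \<epsilon> phi x t) / \<epsilon>\<^sup>2) \<longlongrightarrow> 0) (at_right 0)
       \<longleftrightarrow> F_op AA x t (phit x t) (D2phi x t) \<le> 0"
    if x: "x \<in> \<Omega>" and t: "t \<in> {t1<..<t2}" and C: "C21_on (\<Omega> \<times> {t1<..<t2}) phi phit Dphi D2phi"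
    for x t phi phit Dphi D2phi
  proof -
    from lim_max_iff[OF lims[OF x t C]]
    have "((\<lambda>\<epsilon>. max 0 (- phi x t + mean_op AA \<epsilon> phi x t) / \<epsilon>\<^sup>2) \<longlongrightarrow> 0) (at_right 0)
       \<longleftrightarrow> F_op AA x t (phit x t) (D2phi x t) / (2 * (real CARD('n) + 2)) \<le> 0" .
    also have "\<dots> \<longleftrightarrow> F_op AA x t (phit x t) (D2phi x t) \<le> 0"
      using c by (simp add: divide_le_0_iff)
    finally show ?thesis .
  qed
  have key2: "((\<lambda>\<epsilon>. max 0 (- (- phi x t + mean_op AA \<epsilon> phi x t)) / \<epsilon>\<^sup>2) \<longlongrightarrow> 0) (at_right 0)
       \<longleftrightarrow> F_op AA x t (phit x t) (D2phi x t) \<ge> 0"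
    if x: "x \<in> \<Omega>" and t: "t \<in> {t1<..<t2}" and C: "C21_on (\<Omega> \<times> {t1<..<t2}) phi phit Dphi D2phi"
    for x t phi phit Dphi D2phi
  proof -
    have "((\<lambda>\<epsilon>. - ((- phi x t + mean_op AA \<epsilon> phi x t) / \<epsilon>\<^sup>2)) \<longlongrightarrow>
           - (F_op AA x t (phit x t) (D2phi x t) / (2 * (real CARD('n) + 2)))) (at_right 0)"
      by (rule tendsto_minus[OF lims[OF x t C]])
    hence "((\<lambda>\<epsilon>. (- (- phi x t + mean_op AA \<epsilon> phi x t)) / \<epsilon>\<^sup>2) \<longlongrightarrow>
           - (F_op AA x t (phit x t) (D2phi x t) / (2 * (real CARD('n) + 2)))) (at_right 0)"
      by (simp only: minus_divide_left)
    from lim_max_iff[OF this]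
    have "((\<lambda>\<epsilon>. max 0 (- (- phi x t + mean_op AA \<epsilon> phi x t)) / \<epsilon>\<^sup>2) \<longlongrightarrow> 0) (at_right 0)
       \<longleftrightarrow> - (F_op AA x t (phit x t) (D2phi x t) / (2 * (real CARD('n) + 2))) \<le> 0" .
    also have "\<dots> \<longleftrightarrow> F_op AA x t (phit x t) (D2phi x t) \<ge> 0"
      using c by (simp add: zero_le_divide_iff)
    finally show ?thesis .
  qed
  have key1': "((\<lambda>\<epsilon>. max 0 (mean_op AA \<epsilon> phi x t - phi x t) / \<epsilon>\<^sup>2) \<longlongrightarrow> 0) (at_right 0)
       \<longleftrightarrow> F_op AA x t (phit x t) (D2phi x t) \<le> 0"
    if "x \<in> \<Omega>" and "t \<in> {t1<..<t2}" and "C21_on (\<Omega> \<times> {t1<..<t2}) phi phit Dphi D2phi"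
    for x t phi phit Dphi D2phi
    using key1[OF that] by simp
  have key2': "((\<lambda>\<epsilon>. max 0 (phi x t - mean_op AA \<epsilon> phi x t) / \<epsilon>\<^sup>2) \<longlongrightarrow> 0) (at_right 0)
       \<longleftrightarrow> 0 \<le> F_op AA x t (phit x t) (D2phi x t)"
    if "x \<in> \<Omega>" and "t \<in> {t1<..<t2}" and "C21_on (\<Omega> \<times> {t1<..<t2}) phi phit Dphi D2phi"
    for x t phi phit Dphi D2phi
    using key2[OF that] by simp
  show ?thesis
  proof
    assume "viscosity_solution \<Omega> t1 t2 (F_op AA) u"
    thus "asymp_viscosity \<Omega> t1 t2 AA u"
      unfolding viscosity_solution_def asymp_viscosity_def by (auto simp: key1' key2')
  next
    assume A: "asymp_viscosity \<Omega> t1 t2 AA u"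
    have A': "(strict_loc_max (\<Omega> \<times> {t1<..<t2}) (\<lambda>y s. u y s - phi y s) x t \<and> u x t = phi x t
            \<longrightarrow> F_op AA x t (phit x t) (D2phi x t) \<ge> 0) \<and>
         (strict_loc_min (\<Omega> \<times> {t1<..<t2}) (\<lambda>y s. u y s - phi y s) x t \<and> u x t = phi x t
            \<longrightarrow> F_op AA x t (phit x t) (D2phi x t) \<le> 0)"
      if x: "x \<in> \<Omega>" and t: "t \<in> {t1<..<t2}" and C: "C21_on (\<Omega> \<times> {t1<..<t2}) phi phit Dphi D2phi"
      for x t phi phit Dphi D2phi
    proof -
      from A x t C have
        "(strict_loc_min (\<Omega> \<times> {t1<..<t2}) (\<lambda>y s. u y s - phi y s) x t \<and> u x t = phi x t
            \<longrightarrow> ((\<lambda>\<epsilon>. max 0 (- phi x t + mean_op AA \<epsilon> phi x t) / \<epsilon>\<^sup>2) \<longlongrightarrow> 0) (at_right 0)) \<and>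
         (strict_loc_max (\<Omega> \<times> {t1<..<t2}) (\<lambda>y s. u y s - phi y s) x t \<and> u x t = phi x t
            \<longrightarrow> ((\<lambda>\<epsilon>. max 0 (- (- phi x t + mean_op AA \<epsilon> phi x t)) / \<epsilon>\<^sup>2) \<longlongrightarrow> 0) (at_right 0))"
        unfolding asymp_viscosity_def by blast
      thus ?thesis using key1[OF x t C] key2[OF x t C] by blast
    qed
    show "viscosity_solution \<Omega> t1 t2 (F_op AA) u"
      unfolding viscosity_solution_def using assms(7) A' by blast
  qed
qed

end
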